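(* Let $R$ be an ri function norm admitting the representation $R(X)=\sup\{\int_0^1X^*(\omega)Y^*(\omega)\,d\omega:\mathbb{E}[Y]=R'(Y)=1,\ Y\in\mathcal{M}^+\}$ for all $X\in\mathcal{M}^+$. Then the functional \[ R^-(X)=\sup\left\{\int_0^1X^{*-}(\omega)Y^*(\omega)\,d\omega:\ \mathbb{E}[Y]=R'(Y)=1,\ Y\in\mathcal{M}^+\right\},\quad X\in\mathcal{M}, \] is a law invariant coherent risk measure, coincides with $R$ on $\mathcal{M}^+$, and is translation equivariant: $R^-(X+c)=R^-(X)+c$ for all $c\in\mathbb{R}$.
   Context: $\Omega=[0,1]$ with Lebesgue measure $\mu$, $\mathbb{E}[Y]=\int Y\,d\mu$; $\mathcal{M}$ measurable real functions, $\mathcal{M}^+$ those with values in $[0,\infty]$. An ri function norm is $R:\mathcal{M}^+\to[0,\infty]$ satisfying: $R(X)=0\iff X=0$, positive homogeneity, subadditivity, monotonicity, Fatou property, $R(\chi_E)<\infty$ and $\int_EX\,d\mu\le c_ER(X)$ for constants $c_E$, normalisation $R(\chi_\Omega)=1$, and $R(X)=R(Y)$ for equimeasurable $X,Y$. $X^*(\omega)=\inf\{\lambda\ge0:\mu\{|X|>\lambda\}\le\omega\}$; $X^{*-}(\omega)=\inf\{\lambda\in\mathbb{R}:\mu\{X>\lambda\}\le\omega\}$; $R'(Y)=\sup\{\int_0^1Y^*Z^*\,d\omega:R(Z)\le1, Z\in\mathcal{M}^+\}$ is the associate norm. A coherent risk measure is a functional $\rho$ on $\mathcal{M}$ that is positively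 homogeneous, subadditive, translation equivariant ($\rho(X+c)=\rho(X)+c$) and monotone ($X\le Y$ a.s. $\Rightarrow\rho(X)\le\rho(Y)$); it is law invariant if $\rho(X)=\rho(X')$ whenever $X,X'$ have the same distribution. *)

theory Defs
  imports "HOL-Analysis.Analysis"
begin

definition Omega :: "real measure" where
  "Omega = lebesgue_on {0..1}"

definition Mplus :: "(real \<Rightarrow> ennreal) set" where
  "Mplus = borel_measurable Omega"

definition Mreal :: "(real \<Rightarrow> real) set" where
  "Mreal = borel_measurable Omega"

definition dec_rearr :: "(real \<Rightarrow> ennreal) \<Rightarrow> real \<Rightarrow> ennreal" where
  "dec_rearr X w = Inf {l. emeasure Omega {x \<in> space Omega. X x > l} \<le> ennreal w}"

definition dec_rearr_minus :: "(real \<Rightarrow> real) \<Rightarrow> real \<Rightarrow> ereal" where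
  "dec_rearr_minus X w =
     Inf {ereal l | l. emeasure Omega {x \<in> space Omega. X x > l} \<le> ennreal w}"

text \<open>Integral over [0,1] of an extended-real function: positive part minus negative part
  (with the ereal convention \<infinity> - \<infinity> = \<infinity>).\<close>
definition Eint :: "(real \<Rightarrow> ereal) \<Rightarrow> ereal" where
  "Eint g = enn2ereal (\<integral>\<^sup>+ w. e2ennreal (g w) \<partial>Omega)
          - enn2ereal (\<integral>\<^sup>+ w. e2ennreal (- g w) \<partial>Omega)"

definition ri_function_norm :: "((real \<Rightarrow> ennreal) \<Rightarrow> ennreal) \<Rightarrow> bool" where
  "ri_function_norm R \<longleftrightarrow>
     (\<forall>X\<in>Mplus. R X = 0 \<longleftrightarrow> (AE x in Omega. X x = 0)) \<and>
     (\<forall>X\<in>Mplus. \<forall>a::real. a \<ge> 0 \<longrightarrow> R (\<lambda>x. ennreal a * X x) = ennreal a * R X) \<and>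
     (\<forall>X\<in>Mplus. \<forall>Y\<in>Mplus. R (\<lambda>x. X x + Y x) \<le> R X + R Y) \<and>
     (\<forall>X\<in>Mplus. \<forall>Y\<in>Mplus. (AE x in Omega. X x \<le> Y x) \<longrightarrow> R X \<le> R Y) \<and>
     (\<forall>Xs X. (\<forall>n. Xs n \<in> Mplus) \<longrightarrow> X \<in> Mplus \<longrightarrow>
        (AE x in Omega. incseq (\<lambda>n. Xs n x) \<and> X x = (SUP n. Xs n x)) \<longrightarrow>
        R X = (SUP n. R (Xs n))) \<and>
     (\<forall>E\<in>sets Omega. R (indicator E) < \<infinity> \<and>
        (\<exists>c::real. \<forall>X\<in>Mplus. set_nn_integral Omega E X \<le> ennreal c * R X)) \<and>
     R (indicator (space Omega)) = 1 \<and>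
     (\<forall>X\<in>Mplus. \<forall>Y\<in>Mplus.
        (\<forall>l::real. l \<ge> 0 \<longrightarrow>
           emeasure Omega {x \<in> space Omega. X x > ennreal l}
           = emeasure Omega {x \<in> space Omega. Y x > ennreal l}) \<longrightarrow> R X = R Y)"

definition assoc_norm :: "((real \<Rightarrow> ennreal) \<Rightarrow> ennreal) \<Rightarrow> (real \<Rightarrow> ennreal) \<Rightarrow> ennreal" where
  "assoc_norm R Y = (SUP Z \<in> {Z \<in> Mplus. R Z \<le> 1}.
      \<integral>\<^sup>+ w. dec_rearr Y w * dec_rearr Z w \<partial>Omega)"

definition Dset :: "((real \<Rightarrow> ennreal) \<Rightarrow> ennreal) \<Rightarrow> (real \<Rightarrow> ennreal) set" where
  "Dset R = {Y \<in> Mplus. (\<integral>\<^sup>+ x. Y x \<partial>Omega) = 1 \<and> assoc_norm R Y = 1}"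

definition Rminus :: "((real \<Rightarrow> ennreal) \<Rightarrow> ennreal) \<Rightarrow> (real \<Rightarrow> real) \<Rightarrow> ereal" where
  "Rminus R X = (SUP Y \<in> Dset R.
      Eint (\<lambda>w. dec_rearr_minus X w * enn2ereal (dec_rearr Y w)))"

definition coherent_risk_measure :: "((real \<Rightarrow> real) \<Rightarrow> ereal) \<Rightarrow> bool" where
  "coherent_risk_measure \<rho> \<longleftrightarrow>
     (\<forall>X\<in>Mreal. \<forall>a::real. a \<ge> 0 \<longrightarrow> \<rho> (\<lambda>x. a * X x) = ereal a * \<rho> X) \<and>
     (\<forall>X\<in>Mreal. \<forall>Y\<in>Mreal. \<rho> (\<lambda>x. X x + Y x) \<le> \<rho> X + \<rho> Y) \<and>
     (\<forall>X\<in>Mreal. \<forall>c::real. \<rho> (\<lambda>x. X x + c) = \<rho> X + ereal c) \<and>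
     (\<forall>X\<in>Mreal. \<forall>Y\<in>Mreal. (AE x in Omega. X x \<le> Y x) \<longrightarrow> \<rho> X \<le> \<rho> Y)"

definition law_invariant :: "((real \<Rightarrow> real) \<Rightarrow> ereal) \<Rightarrow> bool" where
  "law_invariant \<rho> \<longleftrightarrow>
     (\<forall>X\<in>Mreal. \<forall>X'\<in>Mreal. distr Omega borel X = distr Omega borel X' \<longrightarrow> \<rho> X = \<rho> X')"

end

theory Submission
  imports Defs
begin

lemma space_Omega[simp]: "space Omega = {0..1}"
  by (simp add: Omega_def)

lemma sets_Omega_iff: "A \<in> sets Omega \<longleftrightarrow> A \<in> sets lebesgue \<and> A \<subseteq> {0..1}"
  unfolding Omega_def by (auto simp: sets_restrict_space_iff)

lemma emeasure_Omega: "A \<in> sets Omega \<Longrightarrow> emeasure Omega A = emeasure lebesgue A"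
  unfolding Omega_def by (subst emeasure_restrict_space) (auto simp: sets_restrict_space_iff)

lemma emeasure_Omega_Ico:
  assumes "0 \<le> t" "t \<le> 1"
  shows "emeasure Omega {w \<in> space Omega. w < t} = ennreal t"
proof -
  have e: "{w \<in> space Omega. w < t} = {0..<t}" using assms by auto
  have "{0..<t} \<in> sets Omega" using assms by (auto simp: sets_Omega_iff)
  then show ?thesis unfolding e using assms by (simp add: emeasure_Omega)
qed

lemma emeasure_Omega_space: "emeasure Omega {0..1} = 1"
  by (simp add: emeasure_Omega sets_Omega_iff)

lemma emeasure_Omega_le1: "emeasure Omega A \<le> 1"
proof (cases "A \<in> sets Omega")
  case True
  then have "emeasure Omega A \<le> emeasure Omega (space Omega)"
    using sets.sets_into_space[OF True] by (intro emeasure_mono) (auto simp del: space_Omega)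
  then show ?thesis using emeasure_Omega_space by simp
next
  case False then show ?thesis by (simp add: emeasure_notin_sets)
qed

lemma finite_measure_Omega: "finite_measure Omega"
  by (rule finite_measureI) (simp add: emeasure_Omega_space)

interpretation Om: finite_measure Omega by (rule finite_measure_Omega)

definition TX :: "(real \<Rightarrow> real) \<Rightarrow> real \<Rightarrow> ennreal" where
  "TX X l = emeasure Omega {x \<in> space Omega. l < X x}"

lemma TX_mono:
  assumes "X \<in> borel_measurable Omega" "l \<le> l'"
  shows "TX X l' \<le> TX X l"
  unfolding TX_def
proof (rule emeasure_mono)
  show "{x \<in> space Omega. l' < X x} \<subseteq> {x \<in> space Omega. l < X x}" using assms(2) by auto
  show "{x \<in> space Omega. l < X x} \<in> sets Omega" using assms(1) by measurable
qed

lemma TX_rcont: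
  assumes X: "X \<in> borel_measurable Omega"
  shows "(SUP n. TX X (l + 1 / Suc n)) = TX X l"
proof -
  let ?A = "\<lambda>n::nat. {x \<in> space Omega. l + 1 / Suc n < X x}"
  have "?A n \<in> sets Omega" for n using X by measurable
  then have r: "range ?A \<subseteq> sets Omega" by auto
  have i: "incseq ?A"
  proof (rule incseq_SucI, safe)
    fix n x assume "l + 1 / real (Suc n) < X x"
    moreover have "1 / real (Suc (Suc n)) \<le> 1 / real (Suc n)"
      by (simp add: frac_le)
    ultimately show "l + 1 / real (Suc (Suc n)) < X x" by linarith
  qed
  have u: "(\<Union>n. ?A n) = {x \<in> space Omega. l < X x}"
  proof safe
    fix x assume x: "x \<in> space Omega" "l < X x"
    then obtain n where "1 / real (Suc n) < X x - l"
      using reals_Archimedean[of "X x - l"] by (auto simp: inverse_eq_divide)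
    then have "x \<in> ?A n" using x by auto
    then show "x \<in> (\<Union>n. ?A n)" by blast
  next
    fix x n assume "l + 1 / real (Suc n) < X x"
    moreover have "0 \<le> 1 / real (Suc n)" by simp
    ultimately show "l < X x" by linarith
  qed
  show ?thesis unfolding TX_def using SUP_emeasure_incseq[OF r i] u by simp
qed

lemma dec_rearr_minus_TX:
  "dec_rearr_minus X w = Inf {ereal l | l. TX X l \<le> ennreal w}"
  unfolding dec_rearr_minus_def TX_def by simp

lemma KEY1:
  assumes X: "X \<in> borel_measurable Omega"
  shows "ereal l < dec_rearr_minus X w \<longleftrightarrow> ennreal w < TX X l"
proof
  assume "ereal l < dec_rearr_minus X w"
  show "ennreal w < TX X l"
  proof (rule ccontr)
    assume "\<not> ennreal w < TX X l"
    then have "ereal l \<in> {ereal l | l. TX X l \<le> ennreal w}" by auto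
    then have "dec_rearr_minus X w \<le> ereal l"
      unfolding dec_rearr_minus_TX by (rule Inf_lower)
    with \<open>ereal l < dec_rearr_minus X w\<close> show False by simp
  qed
next
  assume "ennreal w < TX X l"
  then have "ennreal w < (SUP n. TX X (l + 1 / Suc n))" using TX_rcont[OF X, of l] by simp
  then obtain n where n: "ennreal w < TX X (l + 1 / Suc n)"
    by (auto simp: less_SUP_iff)
  have "ereal (l + 1 / Suc n) \<le> dec_rearr_minus X w"
    unfolding dec_rearr_minus_TX
  proof (rule Inf_greatest, safe)
    fix l' assume l': "TX X l' \<le> ennreal w"
    show "ereal (l + 1 / Suc n) \<le> ereal l'"
    proof (rule ccontr)
      assume "\<not> ereal (l + 1 / Suc n) \<le> ereal l'"
      then have "l' \<le> l + 1 / Suc n" by simp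
      then have "TX X (l + 1 / Suc n) \<le> TX X l'" by (rule TX_mono[OF X])
      with l' n show False by simp
    qed
  qed
  moreover have "ereal l < ereal (l + 1 / Suc n)" by simp
  ultimately show "ereal l < dec_rearr_minus X w" by (metis less_le_trans)
qed

lemma ereal_eqI_less:
  fixes x y :: ereal
  assumes "\<And>l. ereal l < x \<longleftrightarrow> ereal l < y"
  shows "x = y"
proof (rule ccontr)
  assume "x \<noteq> y"
  then consider "x < y" | "y < x" using linorder_neqE by blast
  then show False
  proof cases
    case 1
    then obtain r where "x < ereal r" "ereal r < y" using ereal_dense2 by blast
    moreover have "ereal r < x" if "ereal r < y" using assms that by blast
    ultimately show False by simp
  next
    case 2
    then obtain r where "y < ereal r" "ereal r < x" using ereal_dense2 by blast
    moreover have "ereal r < y" if "ereal r < x" using assms that by blast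
    ultimately show False by simp
  qed
qed

lemma ereal_leI_less:
  fixes x y :: ereal
  assumes "\<And>l. ereal l < x \<Longrightarrow> ereal l < y"
  shows "x \<le> y"
proof (rule ccontr)
  assume "\<not> x \<le> y"
  then obtain r where "y < ereal r" "ereal r < x" using ereal_dense2 by (metis not_le)
  then show False using assms[of r] by simp
qed

definition TY :: "(real \<Rightarrow> ennreal) \<Rightarrow> ennreal \<Rightarrow> ennreal" where
  "TY Y l = emeasure Omega {x \<in> space Omega. l < Y x}"

lemma TY_mono:
  assumes "Y \<in> borel_measurable Omega" "l \<le> l'"
  shows "TY Y l' \<le> TY Y l"
  unfolding TY_def
proof (rule emeasure_mono)
  show "{x \<in> space Omega. l' < Y x} \<subseteq> {x \<in> space Omega. l < Y x}" using assms(2) by auto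
  show "{x \<in> space Omega. l < Y x} \<in> sets Omega" using assms(1) by measurable
qed

lemma TY_rcont:
  assumes Y: "Y \<in> borel_measurable Omega" and r: "0 \<le> r"
  shows "(SUP n. TY Y (ennreal (r + 1 / Suc n))) = TY Y (ennreal r)"
proof -
  let ?A = "\<lambda>n::nat. {x \<in> space Omega. ennreal (r + 1 / Suc n) < Y x}"
  have "?A n \<in> sets Omega" for n using Y by measurable
  then have rr: "range ?A \<subseteq> sets Omega" by auto
  have i: "incseq ?A"
  proof (rule incseq_SucI, safe)
    fix n x assume a: "ennreal (r + 1 / real (Suc n)) < Y x"
    have "1 / real (Suc (Suc n)) \<le> 1 / real (Suc n)"
      by (simp add: frac_le)
    then have "ennreal (r + 1 / real (Suc (Suc n))) \<le> ennreal (r + 1 / real (Suc n))"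
      by (intro ennreal_leI) linarith
    with a show "ennreal (r + 1 / real (Suc (Suc n))) < Y x" by (metis le_less_trans)
  qed
  have u: "(\<Union>n. ?A n) = {x \<in> space Omega. ennreal r < Y x}"
  proof safe
    fix x assume x: "x \<in> space Omega" "ennreal r < Y x"
    have "\<exists>n. ennreal (r + 1 / Suc n) < Y x"
    proof (cases "Y x = top")
      case True then show ?thesis by (auto simp: top_unique)
    next
      case False
      then obtain y where y: "Y x = ennreal y" "0 \<le> y" by (cases "Y x") auto
      with x r have "r < y" by (simp add: ennreal_less_iff)
      then obtain n where "1 / real (Suc n) < y - r"
        using reals_Archimedean[of "y - r"] by (auto simp: inverse_eq_divide)
      then have "ennreal (r + 1 / Suc n) < ennreal y"
        using r by (subst ennreal_less_iff) auto
      then show ?thesis using y by auto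
    qed
    then obtain n where "ennreal (r + 1 / Suc n) < Y x" by blast
    then have "x \<in> ?A n" using x by auto
    then show "x \<in> (\<Union>n. ?A n)" by blast
  next
    fix x n assume a: "ennreal (r + 1 / real (Suc n)) < Y x"
    have "ennreal r \<le> ennreal (r + 1 / real (Suc n))" by (intro ennreal_leI) simp
    with a show "ennreal r < Y x" by (metis le_less_trans)
  qed
  show ?thesis unfolding TY_def using SUP_emeasure_incseq[OF rr i] u by simp
qed

lemma dec_rearr_TY:
  "dec_rearr Y w = Inf {l. TY Y l \<le> ennreal w}"
  unfolding dec_rearr_def TY_def by simp

lemma TY_top: "TY Y top = 0"
  unfolding TY_def by (simp add: top_unique)

lemma KEY2:
  assumes Y: "Y \<in> borel_measurable Omega"
  shows "l < dec_rearr Y w \<longleftrightarrow> ennreal w < TY Y l"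
proof
  assume "l < dec_rearr Y w"
  show "ennreal w < TY Y l"
  proof (rule ccontr)
    assume "\<not> ennreal w < TY Y l"
    then have "l \<in> {l. TY Y l \<le> ennreal w}" by auto
    then have "dec_rearr Y w \<le> l"
      unfolding dec_rearr_TY by (rule Inf_lower)
    with \<open>l < dec_rearr Y w\<close> show False by simp
  qed
next
  assume w: "ennreal w < TY Y l"
  then have "l \<noteq> top" by (auto simp: TY_top)
  then obtain r where lr: "l = ennreal r" "0 \<le> r" by (cases l) auto
  have "ennreal w < (SUP n. TY Y (ennreal (r + 1 / Suc n)))"
    using TY_rcont[OF Y lr(2)] w lr by simp
  then obtain n where n: "ennreal w < TY Y (ennreal (r + 1 / Suc n))"
    by (auto simp: less_SUP_iff)
  have "ennreal (r + 1 / Suc n) \<le> dec_rearr Y w"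
    unfolding dec_rearr_TY
  proof (rule Inf_greatest, safe)
    fix l' assume l': "TY Y l' \<le> ennreal w"
    show "ennreal (r + 1 / Suc n) \<le> l'"
    proof (rule ccontr)
      assume "\<not> ennreal (r + 1 / Suc n) \<le> l'"
      then have "l' \<le> ennreal (r + 1 / Suc n)" by simp
      then have "TY Y (ennreal (r + 1 / Suc n)) \<le> TY Y l'" by (rule TY_mono[OF Y])
      with l' n show False by simp
    qed
  qed
  moreover have "l < ennreal (r + 1 / Suc n)" using lr by (simp add: ennreal_less_iff)
  ultimately show "l < dec_rearr Y w" by (metis less_le_trans)
qed

lemma id_meas_Omega: "(\<lambda>w::real. w) \<in> borel_measurable Omega"
  unfolding Omega_def
  by (rule continuous_imp_measurable_on_sets_lebesgue) (auto intro: continuous_intros)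

lemma ereal_measI:
  fixes f :: "'a \<Rightarrow> ereal"
  assumes "\<And>l::real. {w \<in> space M. ereal l < f w} \<in> sets M"
  shows "f \<in> borel_measurable M"
proof (rule borel_measurableI_greater)
  fix y :: ereal
  show "{w \<in> space M. y < f w} \<in> sets M"
  proof (cases y)
    case (real r) then show ?thesis using assms by simp
  next
    case PInf then show ?thesis by simp
  next
    case MInf
    have "{w \<in> space M. y < f w} = (\<Union>n::nat. {w \<in> space M. ereal (- real n) < f w})"
    proof safe
      fix w assume w: "w \<in> space M" "y < f w"
      show "w \<in> (\<Union>n::nat. {w \<in> space M. ereal (- real n) < f w})"
      proof (cases "f w")
        case (real r)
        obtain n :: nat where "- r < real n" using reals_Archimedean2 by blast
        then have "ereal (- real n) < f w" using real by simp
        then show ?thesis using w by blast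
      next
        case PInf
        then have "ereal (- real 0) < f w" by simp
        then show ?thesis using w by blast
      next
        case MInf then show ?thesis using w MInf \<open>y = - \<infinity>\<close> by simp
      qed
    next
      fix w n assume "ereal (- real n) < f w"
      then show "y < f w" using MInf by (cases "f w") auto
    qed
    also have "\<dots> \<in> sets M" using assms by blast
    finally show ?thesis .
  qed
qed

lemma set_ennreal_less_meas: "{w \<in> space Omega. ennreal w < c} \<in> sets Omega"
  using id_meas_Omega by measurable

lemma meas_dec_rearr_minus:
  assumes "X \<in> borel_measurable Omega"
  shows "dec_rearr_minus X \<in> borel_measurable Omega"
  by (rule ereal_measI) (simp add: KEY1[OF assms] set_ennreal_less_meas del: space_Omega)

lemma meas_dec_rearr:
  assumes "Y \<in> borel_measurable Omega"
  shows "dec_rearr Y \<in> borel_measurable Omega"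
  by (rule borel_measurableI_greater) (simp add: KEY2[OF assms] set_ennreal_less_meas del: space_Omega)

lemma e2_lt: "0 \<le> s \<Longrightarrow> ennreal s < e2ennreal z \<longleftrightarrow> ereal s < z"
  by (cases z) (auto simp: ennreal_less_iff e2ennreal_neg)

lemma e2_mult: "e2ennreal (x * enn2ereal g) = e2ennreal x * g"
proof (cases g)
  case (real r)
  then show ?thesis
    by (cases x) (auto simp: e2ennreal_neg ennreal_mult'' ennreal_mult_top zero_le_mult_iff
                       mult_le_0_iff ennreal_mult less_le ennreal_mult_eq_top_iff)
next
  case top
  then show ?thesis
    by (cases x) (auto simp: e2ennreal_neg ennreal_top_mult not_le ennreal_mult_top ennreal_neg)
qed

lemma pair_Omega_lborel: "pair_sigma_finite Omega lborel"
  by (intro pair_sigma_finite.intro Om.sigma_finite_measure_axioms lborel.sigma_finite_measure_axioms)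

lemma lborel_Ici_top: "emeasure lborel {0::real..} = top"
proof (rule ccontr)
  assume "emeasure lborel {0::real..} \<noteq> top"
  then obtain n :: nat where n: "emeasure lborel {0::real..} < of_nat n"
    using ennreal_Ex_less_of_nat by (auto simp: less_top)
  have "emeasure lborel {0::real..real n} \<le> emeasure lborel {0::real..}"
    by (rule emeasure_mono) auto
  with n show False by (simp add: ennreal_of_nat_eq_real_of_nat)
qed

lemma layer_one:
  fixes g :: ennreal
  shows "(\<integral>\<^sup>+ s. (if 0 \<le> s \<and> ennreal s < g then 1 else 0) \<partial>lborel) = g"
proof (cases g)
  case (real r)
  then have "(\<lambda>s. if 0 \<le> s \<and> ennreal s < g then 1 else 0 :: ennreal) = indicator {0..<r}"
    by (auto simp: fun_eq_iff ennreal_less_iff indicator_def)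
  then show ?thesis using real by simp
next
  case top
  then have "(\<lambda>s. if 0 \<le> s \<and> ennreal s < g then 1 else 0 :: ennreal) = indicator {0..}"
    by (auto simp: fun_eq_iff indicator_def)
  then show ?thesis using top by (simp add: lborel_Ici_top)
qed

lemma LC:
  assumes v[measurable]: "v \<in> borel_measurable Omega" and G[measurable]: "G \<in> borel_measurable Omega"
  shows "(\<integral>\<^sup>+ w. v w * G w \<partial>Omega)
       = (\<integral>\<^sup>+ s. (\<integral>\<^sup>+ w. (if 0 \<le> s \<and> ennreal s < G w then v w else 0) \<partial>Omega) \<partial>lborel)"
proof -
  have "(\<integral>\<^sup>+ w. v w * G w \<partial>Omega)
      = (\<integral>\<^sup>+ w. (\<integral>\<^sup>+ s. (if 0 \<le> s \<and> ennreal s < G w then v w else 0) \<partial>lborel) \<partial>Omega)"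
  proof (rule nn_integral_cong)
    fix w
    have "(\<integral>\<^sup>+ s. (if 0 \<le> s \<and> ennreal s < G w then v w else 0) \<partial>lborel)
        = (\<integral>\<^sup>+ s. v w * (if 0 \<le> s \<and> ennreal s < G w then 1 else 0) \<partial>lborel)"
      by (intro nn_integral_cong) auto
    also have "\<dots> = v w * G w"
      by (subst nn_integral_cmult) (auto simp: layer_one)
    finally show "v w * G w = (\<integral>\<^sup>+ s. (if 0 \<le> s \<and> ennreal s < G w then v w else 0) \<partial>lborel)" by simp
  qed
  also have "\<dots> = (\<integral>\<^sup>+ s. (\<integral>\<^sup>+ w. (if 0 \<le> s \<and> ennreal s < G w then v w else 0) \<partial>Omega) \<partial>lborel)"
  proof (rule pair_sigma_finite.Fubini'[OF pair_Omega_lborel,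
        of "\<lambda>w s. (if 0 \<le> s \<and> ennreal s < G w then v w else 0)", symmetric])
    show "(\<lambda>(w, s). if 0 \<le> s \<and> ennreal s < G w then v w else 0) \<in> borel_measurable (Omega \<Otimes>\<^sub>M lborel)"
      by measurable
  qed
  finally show ?thesis .
qed

lemma MEAS_INIT:
  assumes "t \<le> 1"
  shows "emeasure Omega {w \<in> space Omega. ennreal w < t} = t"
proof -
  have "t < top" using assms ennreal_one_less_top le_less_trans by blast
  then obtain r where r: "t = ennreal r" "0 \<le> r" by (cases t) auto
  with assms have r1: "r \<le> 1" by (simp add: ennreal_le_iff2)
  have "{w \<in> space Omega. ennreal w < t} = {w \<in> space Omega. w < r}"
    using r by (auto simp: ennreal_less_iff)
  then show ?thesis using emeasure_Omega_Ico[OF r(2) r1] r by simp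
qed

lemma null_one: "{1::real} \<in> null_sets Omega"
proof -
  have s: "{1::real} \<in> sets Omega" by (simp add: sets_Omega_iff)
  then show ?thesis by (simp add: null_sets_def emeasure_Omega)
qed

lemma AE_lt1: "AE w in Omega. w < 1"
  by (rule AE_I'[OF null_one]) auto

declare space_Omega[simp del]

lemma emeasure_Omega_space'[simp]: "emeasure Omega (space Omega) = 1"
  using emeasure_Omega_space by (simp add: space_Omega)

lemma emeasure_Omega_fin: "emeasure Omega A \<noteq> \<infinity>"
  using emeasure_Omega_le1[of A] by (metis ennreal_one_less_top infinity_ennreal_def leD)

lemma Q_antimono:
  assumes "w \<le> w'"
  shows "dec_rearr_minus X w' \<le> dec_rearr_minus X w"
  unfolding dec_rearr_minus_TX
proof (rule Inf_superset_mono, safe)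
  fix l assume "TX X l \<le> ennreal w"
  also have "\<dots> \<le> ennreal w'" using assms by (rule ennreal_leI)
  finally show "\<exists>l'. ereal l = ereal l' \<and> TX X l' \<le> ennreal w'" by blast
qed

lemma TX_lower:
  assumes X: "X \<in> borel_measurable Omega"
  shows "(SUP n::nat. TX X (- real n)) = 1"
proof -
  let ?A = "\<lambda>n::nat. {x \<in> space Omega. - real n < X x}"
  have "?A n \<in> sets Omega" for n using X by measurable
  then have rr: "range ?A \<subseteq> sets Omega" by auto
  have i: "incseq ?A" by (rule incseq_SucI) auto
  have u: "(\<Union>n. ?A n) = space Omega"
  proof (intro equalityI subsetI)
    fix x assume "x \<in> (\<Union>n. ?A n)" then show "x \<in> space Omega" by auto
  next
    fix x assume x: "x \<in> space Omega"
    obtain n :: nat where "- X x < real n" using reals_Archimedean2 by blast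
    then have "x \<in> ?A n" using x by auto
    then show "x \<in> (\<Union>n. ?A n)" by blast
  qed
  show ?thesis unfolding TX_def using SUP_emeasure_incseq[OF rr i] u emeasure_Omega_space by simp
qed

lemma TX_upper:
  assumes X: "X \<in> borel_measurable Omega"
  shows "(INF n::nat. TX X (real n)) = 0"
proof -
  let ?A = "\<lambda>n::nat. {x \<in> space Omega. real n < X x}"
  have "?A n \<in> sets Omega" for n using X by measurable
  then have rr: "range ?A \<subseteq> sets Omega" by auto
  have d: "decseq ?A" by (rule decseq_SucI) auto
  have u: "(\<Inter>n. ?A n) = {}"
  proof safe
    fix x assume x: "x \<in> (\<Inter>n. ?A n)"
    obtain n :: nat where "X x < real n" using reals_Archimedean2 by blast
    moreover from x have "real n < X x" by auto
    ultimately show "x \<in> {}" by linarith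
  qed
  have f: "\<And>i. emeasure Omega (?A i) \<noteq> \<infinity>" by (rule emeasure_Omega_fin)
  show ?thesis unfolding TX_def using INF_emeasure_decseq[OF rr d f] u by simp
qed

lemma Q_finite:
  assumes X: "X \<in> borel_measurable Omega" and t: "0 < t" "t < 1"
  shows "\<bar>dec_rearr_minus X t\<bar> \<noteq> \<infinity>"
proof -
  have "ennreal t < 1" using t by (simp add: ennreal_less_iff)
  then obtain n :: nat where n: "ennreal t < TX X (- real n)"
    using TX_lower[OF X] by (metis less_SUP_iff)
  then have lo: "ereal (- real n) < dec_rearr_minus X t" using KEY1[OF X] by blast
  have hi: "dec_rearr_minus X t \<noteq> \<infinity>"
  proof
    assume inf: "dec_rearr_minus X t = \<infinity>"
    have "ennreal t \<le> (INF n::nat. TX X (real n))"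
    proof (rule INF_greatest)
      fix n :: nat
      have "ereal (real n) < dec_rearr_minus X t" using inf by simp
      then show "ennreal t \<le> TX X (real n)" using KEY1[OF X] by (meson less_imp_le)
    qed
    then show False using TX_upper[OF X] t by simp
  qed
  show ?thesis using lo hi by auto
qed

lemma Q_const:
  assumes "0 \<le> w" "w < 1"
  shows "dec_rearr_minus (\<lambda>_. c) w = ereal c"
proof (rule ereal_eqI_less)
  fix l
  have "TX (\<lambda>_. c) l = (if l < c then 1 else 0)"
    unfolding TX_def using emeasure_Omega_space by auto
  moreover have "ennreal w < 1" using assms by (simp add: ennreal_less_iff)
  ultimately show "ereal l < dec_rearr_minus (\<lambda>_. c) w \<longleftrightarrow> ereal l < ereal c"
    by (subst KEY1) auto
qed

lemma Q_scale:
  assumes X: "X \<in> borel_measurable Omega" and a: "0 < a"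
  shows "dec_rearr_minus (\<lambda>x. a * X x) w = ereal a * dec_rearr_minus X w"
proof (rule ereal_eqI_less)
  fix l
  have X': "(\<lambda>x. a * X x) \<in> borel_measurable Omega" using X by measurable
  have "TX (\<lambda>x. a * X x) l = TX X (l / a)"
    unfolding TX_def using a by (simp add: divide_less_eq mult.commute)
  then have "ereal l < dec_rearr_minus (\<lambda>x. a * X x) w \<longleftrightarrow> ereal (l / a) < dec_rearr_minus X w"
    using KEY1[OF X'] KEY1[OF X] by simp
  also have "\<dots> \<longleftrightarrow> ereal l < ereal a * dec_rearr_minus X w"
    using a by (cases "dec_rearr_minus X w") (auto simp: divide_less_eq mult.commute)
  finally show "ereal l < dec_rearr_minus (\<lambda>x. a * X x) w \<longleftrightarrow> ereal l < ereal a * dec_rearr_minus X w" .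
qed

lemma Q_mono:
  assumes X: "X \<in> borel_measurable Omega" and Y: "Y \<in> borel_measurable Omega"
    and le: "AE x in Omega. X x \<le> Y x"
  shows "dec_rearr_minus X w \<le> dec_rearr_minus Y w"
  unfolding dec_rearr_minus_TX
proof (rule Inf_superset_mono, safe)
  fix l assume l: "TX Y l \<le> ennreal w"
  have "TX X l \<le> TX Y l" unfolding TX_def
    by (rule emeasure_mono_AE) (use le Y in \<open>auto elim!: eventually_mono\<close>)
  with l show "\<exists>l'. ereal l = ereal l' \<and> TX X l' \<le> ennreal w" by auto
qed

lemma Q_law:
  assumes X: "X \<in> borel_measurable Omega" and X': "X' \<in> borel_measurable Omega"
    and d: "distr Omega borel X = distr Omega borel X'"
  shows "dec_rearr_minus X = dec_rearr_minus X'"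
proof -
  have "TX X l = TX X' l" for l
  proof -
    have "emeasure (distr Omega borel X) {l<..} = emeasure (distr Omega borel X') {l<..}"
      using d by simp
    then have "emeasure Omega (X -` {l<..} \<inter> space Omega) = emeasure Omega (X' -` {l<..} \<inter> space Omega)"
      using X X' by (simp add: emeasure_distr)
    moreover have "X -` {l<..} \<inter> space Omega = {x \<in> space Omega. l < X x}"
                  "X' -` {l<..} \<inter> space Omega = {x \<in> space Omega. l < X' x}" by auto
    ultimately show ?thesis unfolding TX_def by simp
  qed
  then show ?thesis unfolding dec_rearr_minus_TX[abs_def] by simp
qed

lemma Q_pos:
  assumes X: "X \<in> borel_measurable Omega" and pos: "AE x in Omega. 0 \<le> X x"
    and w: "0 \<le> w" "w < 1"
  shows "dec_rearr_minus X w = enn2ereal (dec_rearr (\<lambda>x. ennreal (X x)) w)"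
proof (rule ereal_eqI_less)
  fix l
  have X': "(\<lambda>x. ennreal (X x)) \<in> borel_measurable Omega" using X by measurable
  show "ereal l < dec_rearr_minus X w \<longleftrightarrow> ereal l < enn2ereal (dec_rearr (\<lambda>x. ennreal (X x)) w)"
  proof (cases "l < 0")
    case True
    have "TX X l = emeasure Omega (space Omega)" unfolding TX_def
      by (rule emeasure_eq_AE) (use pos True X in \<open>auto elim!: eventually_mono\<close>)
    then have "TX X l = 1" using emeasure_Omega_space by simp
    moreover have "ennreal w < 1" using w by (simp add: ennreal_less_iff)
    moreover have "ereal l < enn2ereal (dec_rearr (\<lambda>x. ennreal (X x)) w)"
    proof -
      have "ereal l < 0" using True by simp
      then show ?thesis using enn2ereal_nonneg by (rule less_le_trans)
    qed
    ultimately show ?thesis using KEY1[OF X] by simp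
  next
    case False
    have "TY (\<lambda>x. ennreal (X x)) (ennreal l) = TX X l"
      unfolding TY_def TX_def using False by (simp add: ennreal_less_iff)
    moreover have "ereal l < enn2ereal d \<longleftrightarrow> ennreal l < d" for d
      using e2_lt[of l "enn2ereal d"] False by simp
    ultimately show ?thesis using KEY1[OF X] KEY2[OF X'] by simp
  qed
qed

lemma LC1:
  assumes G[measurable]: "G \<in> borel_measurable Omega"
  shows "(\<integral>\<^sup>+ w. G w \<partial>Omega)
       = (\<integral>\<^sup>+ s. (if 0 \<le> s then emeasure Omega {w \<in> space Omega. ennreal s < G w} else 0) \<partial>lborel)"
proof -
  have "(\<integral>\<^sup>+ w. G w \<partial>Omega) = (\<integral>\<^sup>+ w. 1 * G w \<partial>Omega)" by simp
  also have "\<dots> = (\<integral>\<^sup>+ s. (\<integral>\<^sup>+ w. (if 0 \<le> s \<and> ennreal s < G w then 1 else 0) \<partial>Omega) \<partial>lborel)"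
    by (rule LC) auto
  also have "\<dots> = (\<integral>\<^sup>+ s. (if 0 \<le> s then emeasure Omega {w \<in> space Omega. ennreal s < G w} else 0) \<partial>lborel)"
  proof (rule nn_integral_cong)
    fix s :: real
    show "(\<integral>\<^sup>+ w. (if 0 \<le> s \<and> ennreal s < G w then 1 else 0) \<partial>Omega)
        = (if 0 \<le> s then emeasure Omega {w \<in> space Omega. ennreal s < G w} else 0)"
    proof (cases "0 \<le> s")
      case True
      have "(\<integral>\<^sup>+ w. (if 0 \<le> s \<and> ennreal s < G w then 1 else 0) \<partial>Omega)
          = (\<integral>\<^sup>+ w. indicator {w \<in> space Omega. ennreal s < G w} w \<partial>Omega)"
        by (rule nn_integral_cong) (use True in \<open>auto simp: indicator_def\<close>)
      also have "\<dots> = emeasure Omega {w \<in> space Omega. ennreal s < G w}"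
        by (rule nn_integral_indicator) measurable
      finally show ?thesis using True by simp
    qed simp
  qed
  finally show ?thesis .
qed

lemma E1:
  assumes Y[measurable]: "Y \<in> borel_measurable Omega"
  shows "(\<integral>\<^sup>+ w. dec_rearr Y w \<partial>Omega) = (\<integral>\<^sup>+ x. Y x \<partial>Omega)"
proof -
  have G: "dec_rearr Y \<in> borel_measurable Omega" by (rule meas_dec_rearr[OF Y])
  have "emeasure Omega {w \<in> space Omega. ennreal s < dec_rearr Y w}
      = emeasure Omega {x \<in> space Omega. ennreal s < Y x}" (is "?L s = ?R s") for s
  proof -
    have "{w \<in> space Omega. ennreal s < dec_rearr Y w} = {w \<in> space Omega. ennreal w < TY Y (ennreal s)}"
      using KEY2[OF Y] by blast
    then show ?thesis using MEAS_INIT[OF emeasure_Omega_le1] unfolding TY_def by simp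
  qed
  note eq = this
  show ?thesis unfolding LC1[OF G] LC1[OF Y]
    by (rule nn_integral_cong) (simp only: eq)
qed

lemma ereal_less_minus_iff: "ereal s < z - ereal c \<longleftrightarrow> ereal (s + c) < z"
  by (cases z) auto

lemma E2:
  assumes X[measurable]: "X \<in> borel_measurable Omega"
  shows "(\<integral>\<^sup>+ w. e2ennreal (dec_rearr_minus X w - ereal c) \<partial>Omega) = (\<integral>\<^sup>+ x. ennreal (X x - c) \<partial>Omega)"
proof -
  have Q[measurable]: "dec_rearr_minus X \<in> borel_measurable Omega" by (rule meas_dec_rearr_minus[OF X])
  have G: "(\<lambda>w. e2ennreal (dec_rearr_minus X w - ereal c)) \<in> borel_measurable Omega" by measurable
  have G2: "(\<lambda>x. ennreal (X x - c)) \<in> borel_measurable Omega" by measurable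
  have "(if 0 \<le> s then emeasure Omega {w \<in> space Omega. ennreal s < e2ennreal (dec_rearr_minus X w - ereal c)} else 0)
      = (if 0 \<le> s then emeasure Omega {x \<in> space Omega. ennreal s < ennreal (X x - c)} else 0)" for s
  proof (cases "0 \<le> s")
    case True
    have "{w \<in> space Omega. ennreal s < e2ennreal (dec_rearr_minus X w - ereal c)}
        = {w \<in> space Omega. ennreal w < TX X (s + c)}"
      using KEY1[OF X] e2_lt[OF True] ereal_less_minus_iff by auto
    then have "emeasure Omega {w \<in> space Omega. ennreal s < e2ennreal (dec_rearr_minus X w - ereal c)} = TX X (s + c)"
      using MEAS_INIT[OF emeasure_Omega_le1] unfolding TX_def by simp
    moreover have "{x \<in> space Omega. ennreal s < ennreal (X x - c)} = {x \<in> space Omega. s + c < X x}"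
      using True by (auto simp: ennreal_less_iff)
    ultimately show ?thesis using True unfolding TX_def by simp
  qed simp
  note eq = this
  show ?thesis unfolding LC1[OF G] LC1[OF G2]
    by (rule nn_integral_cong) (rule eq)
qed

lemma EM: "ennreal x = ennreal (max x 0)"
  by (cases "0 \<le> x") (auto simp: ennreal_neg max_def)

lemma PL2: "ennreal x + ennreal y = ennreal (max x 0 + max y 0)"
proof -
  have "ennreal x + ennreal y = ennreal (max x 0) + ennreal (max y 0)" using EM[of x] EM[of y] by simp
  also have "\<dots> = ennreal (max x 0 + max y 0)" by (rule ennreal_plus[symmetric]) auto
  finally show ?thesis .
qed

lemma MX: "max (max x 0 + max y 0) 0 = max x 0 + max (y::real) 0"
  by simp

lemma PL3: "ennreal x + ennreal y + ennreal z = ennreal (max x 0 + max y 0 + max z 0)"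
proof -
  have "ennreal x + ennreal y + ennreal z = ennreal (max x 0 + max y 0) + ennreal z" by (simp only: PL2)
  also have "\<dots> = ennreal (max (max x 0 + max y 0) 0 + max z 0)" by (rule PL2)
  also have "max (max x 0 + max y 0) 0 = max x 0 + max y 0" by simp
  finally show ?thesis by simp
qed

lemma P1: assumes c: "0 \<le> c" shows "e2ennreal h \<le> ennreal c + e2ennreal (h - ereal c)"
proof (cases h)
  case (real r)
  have "ennreal r \<le> ennreal (max c 0 + max (r - c) 0)"
    by (rule ennreal_leI) linarith
  moreover have "h - ereal c = ereal (r - c)" using real by simp
  ultimately show ?thesis using real by (simp only: PL2 e2ennreal_ereal)
next
  case PInf then show ?thesis by simp
next
  case MInf then show ?thesis by (simp add: e2ennreal_neg)
qed

lemma P2: assumes c: "0 \<le> c" and h: "ereal c \<le> h \<or> c = 0"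
  shows "e2ennreal h = ennreal c + e2ennreal (h - ereal c)"
proof (cases h)
  case (real r)
  have "max r 0 = max c 0 + max (r - c) 0" using c h real by (auto simp: max_def)
  then have "ennreal r = ennreal (max c 0 + max (r - c) 0)" using EM[of r] by simp
  moreover have "h - ereal c = ereal (r - c)" using real by simp
  ultimately show ?thesis using real by (simp only: PL2 e2ennreal_ereal)
next
  case PInf then show ?thesis by simp
next
  case MInf then show ?thesis using h by (simp add: e2ennreal_neg)
qed

lemma P2': assumes "h \<le> ereal c" shows "e2ennreal (h - ereal c) = 0"
proof (rule e2ennreal_neg)
  show "h - ereal c \<le> 0" using assms by (cases h) auto
qed

lemma P3: "e2ennreal h + ennreal (-c) \<le> e2ennreal (-h) + ennreal c + e2ennreal (h - ereal c)"
proof (cases h)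
  case (real r)
  have "ennreal (max r 0 + max (-c) 0) \<le> ennreal (max (-r) 0 + max c 0 + max (r - c) 0)"
    by (rule ennreal_leI) (auto simp: max_def)
  moreover have "h - ereal c = ereal (r - c)" "-h = ereal (-r)" using real by simp_all
  ultimately show ?thesis using real by (simp only: PL2 MX e2ennreal_ereal)
next
  case PInf then show ?thesis by simp
next
  case MInf then show ?thesis by simp
qed

lemma P4: assumes h: "ereal c \<le> h"
  shows "e2ennreal h + ennreal (-c) = e2ennreal (-h) + ennreal c + e2ennreal (h - ereal c)"
proof (cases h)
  case (real r)
  have "max r 0 + max (-c) 0 = max (-r) 0 + max c 0 + max (r - c) 0"
    using h real by (auto simp: max_def)
  moreover have "h - ereal c = ereal (r - c)" "-h = ereal (-r)" using real by simp_all
  ultimately show ?thesis using real by (simp only: PL2 MX e2ennreal_ereal)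
next
  case PInf then show ?thesis by simp
next
  case MInf then show ?thesis using h by simp
qed

definition SS :: "ennreal \<Rightarrow> real set" where
  "SS \<tau> = {w \<in> space Omega. ennreal w < \<tau>}"

definition IS :: "ennreal \<Rightarrow> (real \<Rightarrow> ennreal) \<Rightarrow> ennreal" where
  "IS \<tau> H = (\<integral>\<^sup>+ w. H w * indicator (SS \<tau>) w \<partial>Omega)"

lemma SS_sets[measurable]: "SS \<tau> \<in> sets Omega"
  unfolding SS_def by (rule set_ennreal_less_meas)

lemma SS_meas: "\<tau> \<le> 1 \<Longrightarrow> emeasure Omega (SS \<tau>) = \<tau>"
  unfolding SS_def by (rule MEAS_INIT)

lemma SS_ennreal: "0 \<le> t \<Longrightarrow> w \<in> SS (ennreal t) \<longleftrightarrow> w \<in> space Omega \<and> w < t"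
  unfolding SS_def by (auto simp: ennreal_less_iff space_Omega)

lemma IS_const: "\<tau> \<le> 1 \<Longrightarrow> IS \<tau> (\<lambda>_. k) = k * \<tau>"
  unfolding IS_def by (simp add: nn_integral_cmult_indicator SS_meas)

lemma IS_add:
  assumes [measurable]: "F \<in> borel_measurable Omega" "G \<in> borel_measurable Omega"
  shows "IS \<tau> (\<lambda>w. F w + G w) = IS \<tau> F + IS \<tau> G"
  unfolding IS_def by (subst nn_integral_add[symmetric]) (auto simp: distrib_right)

lemma IND_ADD:
  assumes [measurable]: "F \<in> borel_measurable Omega" "G \<in> borel_measurable Omega"
  shows "(\<integral>\<^sup>+ w. F w * indicator (SS \<tau>) w + G w \<partial>Omega) = IS \<tau> F + (\<integral>\<^sup>+ w. G w \<partial>Omega)"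
  unfolding IS_def by (rule nn_integral_add) auto

lemma CV1:
  assumes h[measurable]: "h \<in> borel_measurable Omega" and c: "0 \<le> c" and tau: "\<tau> \<le> 1"
  shows "IS \<tau> (\<lambda>w. e2ennreal (h w)) \<le> ennreal c * \<tau> + (\<integral>\<^sup>+ w. e2ennreal (h w - ereal c) \<partial>Omega)"
proof -
  have "IS \<tau> (\<lambda>w. e2ennreal (h w))
      \<le> (\<integral>\<^sup>+ w. ennreal c * indicator (SS \<tau>) w + e2ennreal (h w - ereal c) \<partial>Omega)"
    unfolding IS_def
  proof (rule nn_integral_mono)
    fix w
    show "e2ennreal (h w) * indicator (SS \<tau>) w \<le> ennreal c * indicator (SS \<tau>) w + e2ennreal (h w - ereal c)"
      using P1[OF c, of "h w"] by (cases "w \<in> SS \<tau>") auto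
  qed
  also have "\<dots> = IS \<tau> (\<lambda>_. ennreal c) + (\<integral>\<^sup>+ w. e2ennreal (h w - ereal c) \<partial>Omega)"
    by (rule IND_ADD) auto
  finally show ?thesis using IS_const[OF tau] by simp
qed

lemma CV3:
  assumes h[measurable]: "h \<in> borel_measurable Omega" and tau: "\<tau> \<le> 1"
  shows "IS \<tau> (\<lambda>w. e2ennreal (h w)) + ennreal (-c) * \<tau>
       \<le> IS \<tau> (\<lambda>w. e2ennreal (- h w)) + ennreal c * \<tau> + (\<integral>\<^sup>+ w. e2ennreal (h w - ereal c) \<partial>Omega)"
proof -
  have "IS \<tau> (\<lambda>w. e2ennreal (h w)) + ennreal (-c) * \<tau> = IS \<tau> (\<lambda>w. e2ennreal (h w) + ennreal (-c))"
    by (subst IS_add) (auto simp: IS_const[OF tau])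
  also have "\<dots> \<le> (\<integral>\<^sup>+ w. (e2ennreal (- h w) + ennreal c) * indicator (SS \<tau>) w + e2ennreal (h w - ereal c) \<partial>Omega)"
    unfolding IS_def
  proof (rule nn_integral_mono)
    fix w
    show "(e2ennreal (h w) + ennreal (-c)) * indicator (SS \<tau>) w
        \<le> (e2ennreal (- h w) + ennreal c) * indicator (SS \<tau>) w + e2ennreal (h w - ereal c)"
      using P3[of "h w" c] by (cases "w \<in> SS \<tau>") (auto simp: add.assoc)
  qed
  also have "\<dots> = IS \<tau> (\<lambda>w. e2ennreal (- h w) + ennreal c) + (\<integral>\<^sup>+ w. e2ennreal (h w - ereal c) \<partial>Omega)"
    by (rule IND_ADD) auto
  also have "IS \<tau> (\<lambda>w. e2ennreal (- h w) + ennreal c) = IS \<tau> (\<lambda>w. e2ennreal (- h w)) + ennreal c * \<tau>"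
    by (subst IS_add) (auto simp: IS_const[OF tau])
  finally show ?thesis .
qed

lemma Q_split:
  assumes X: "X \<in> borel_measurable Omega" and t: "0 < t" "t < 1" and w: "w \<in> space Omega"
  shows "(w \<in> SS (ennreal t) \<longrightarrow> dec_rearr_minus X t \<le> dec_rearr_minus X w) \<and>
         (w \<notin> SS (ennreal t) \<longrightarrow> dec_rearr_minus X w \<le> dec_rearr_minus X t)"
  using SS_ennreal[of t w] t w Q_antimono[of w t X] Q_antimono[of t w X] by auto

lemma CV2:
  assumes X[measurable]: "X \<in> borel_measurable Omega" and t: "0 < t" "t < 1"
    and a: "dec_rearr_minus X t = ereal a"
  shows "IS (ennreal t) (\<lambda>w. e2ennreal (dec_rearr_minus X w))
       = ennreal (max a 0) * ennreal t + (\<integral>\<^sup>+ w. e2ennreal (dec_rearr_minus X w - ereal (max a 0)) \<partial>Omega)"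
proof -
  have Q[measurable]: "dec_rearr_minus X \<in> borel_measurable Omega" by (rule meas_dec_rearr_minus[OF X])
  have "IS (ennreal t) (\<lambda>w. e2ennreal (dec_rearr_minus X w))
      = (\<integral>\<^sup>+ w. ennreal (max a 0) * indicator (SS (ennreal t)) w
                  + e2ennreal (dec_rearr_minus X w - ereal (max a 0)) \<partial>Omega)"
    unfolding IS_def
  proof (rule nn_integral_cong)
    fix w assume w: "w \<in> space Omega"
    note sp = Q_split[OF X t w]
    show "e2ennreal (dec_rearr_minus X w) * indicator (SS (ennreal t)) w
        = ennreal (max a 0) * indicator (SS (ennreal t)) w + e2ennreal (dec_rearr_minus X w - ereal (max a 0))"
    proof (cases "w \<in> SS (ennreal t)")
      case True
      then have "ereal a \<le> dec_rearr_minus X w" using sp a by simp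
      then have "ereal (max a 0) \<le> dec_rearr_minus X w \<or> max a 0 = 0" by (auto simp: max_def)
      then show ?thesis using True P2[of "max a 0" "dec_rearr_minus X w"] by simp
    next
      case False
      then have "dec_rearr_minus X w \<le> ereal (max a 0)" using sp a
        by (metis ereal_less_eq(3) max.cobounded1 order_trans)
      then have "e2ennreal (dec_rearr_minus X w - ereal (max a 0)) = 0" by (rule P2')
      then show ?thesis using False by simp
    qed
  qed
  also have "\<dots> = IS (ennreal t) (\<lambda>_. ennreal (max a 0)) + (\<integral>\<^sup>+ w. e2ennreal (dec_rearr_minus X w - ereal (max a 0)) \<partial>Omega)"
    by (rule IND_ADD) auto
  finally show ?thesis using IS_const[of "ennreal t"] t by simp
qed

lemma CV4:
  assumes X[measurable]: "X \<in> borel_measurable Omega" and t: "0 < t" "t < 1"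
    and a: "dec_rearr_minus X t = ereal a"
  shows "IS (ennreal t) (\<lambda>w. e2ennreal (dec_rearr_minus X w)) + ennreal (-a) * ennreal t
       = IS (ennreal t) (\<lambda>w. e2ennreal (- dec_rearr_minus X w)) + ennreal a * ennreal t
         + (\<integral>\<^sup>+ w. e2ennreal (dec_rearr_minus X w - ereal a) \<partial>Omega)"
proof -
  have Q[measurable]: "dec_rearr_minus X \<in> borel_measurable Omega" by (rule meas_dec_rearr_minus[OF X])
  have tau: "ennreal t \<le> 1" using t by simp
  have "IS (ennreal t) (\<lambda>w. e2ennreal (dec_rearr_minus X w)) + ennreal (-a) * ennreal t
      = IS (ennreal t) (\<lambda>w. e2ennreal (dec_rearr_minus X w) + ennreal (-a))"
    by (subst IS_add) (auto simp: IS_const[OF tau])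
  also have "\<dots> = (\<integral>\<^sup>+ w. (e2ennreal (- dec_rearr_minus X w) + ennreal a) * indicator (SS (ennreal t)) w
                  + e2ennreal (dec_rearr_minus X w - ereal a) \<partial>Omega)"
    unfolding IS_def
  proof (rule nn_integral_cong)
    fix w assume w: "w \<in> space Omega"
    note sp = Q_split[OF X t w]
    show "(e2ennreal (dec_rearr_minus X w) + ennreal (-a)) * indicator (SS (ennreal t)) w
        = (e2ennreal (- dec_rearr_minus X w) + ennreal a) * indicator (SS (ennreal t)) w
          + e2ennreal (dec_rearr_minus X w - ereal a)"
    proof (cases "w \<in> SS (ennreal t)")
      case True
      then have "ereal a \<le> dec_rearr_minus X w" using sp a by simp
      then show ?thesis using True P4[of a "dec_rearr_minus X w"] by (simp add: add.assoc)
    next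
      case False
      then have "dec_rearr_minus X w \<le> ereal a" using sp a by simp
      then show ?thesis using False P2' by simp
    qed
  qed
  also have "\<dots> = IS (ennreal t) (\<lambda>w. e2ennreal (- dec_rearr_minus X w) + ennreal a)
                  + (\<integral>\<^sup>+ w. e2ennreal (dec_rearr_minus X w - ereal a) \<partial>Omega)"
    by (rule IND_ADD) auto
  also have "IS (ennreal t) (\<lambda>w. e2ennreal (- dec_rearr_minus X w) + ennreal a)
      = IS (ennreal t) (\<lambda>w. e2ennreal (- dec_rearr_minus X w)) + ennreal a * ennreal t"
    by (subst IS_add) (auto simp: IS_const[OF tau])
  finally show ?thesis .
qed

lemma ARITH2:
  fixes PF FN PP PN QP QN EAB EA EB m1 m2 m3 n1 n2 n3 :: ennreal
  assumes f: "PF + m1 \<le> FN + n1 + EAB" and e: "EAB \<le> EA + EB"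
    and p: "PP + m2 = PN + n2 + EA" and q: "QP + m3 = QN + n3 + EB"
    and k: "m1 + n2 + n3 = n1 + m2 + m3"
    and fin: "m1 \<noteq> \<infinity>" "m2 \<noteq> \<infinity>" "m3 \<noteq> \<infinity>" "n2 \<noteq> \<infinity>" "n3 \<noteq> \<infinity>"
  shows "PF + PN + QN \<le> PP + QP + FN"
proof (cases "PP = \<infinity> \<or> QP = \<infinity>")
  case True then show ?thesis by auto
next
  case False
  have "EA \<le> PP + m2" using p by (metis add.commute le_iff_add)
  then have fx: "EA \<noteq> \<infinity>" using False fin by (auto simp: top_unique)
  have "EB \<le> QP + m3" using q by (metis add.commute le_iff_add)
  then have fy: "EB \<noteq> \<infinity>" using False fin by (auto simp: top_unique)
  define Z where "Z = EA + EB + m1 + n2 + n3"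
  have Zf: "Z \<noteq> \<infinity>" using fx fy fin by (simp add: Z_def)
  have "Z + (PF + PN + QN) = (PF + m1) + (PN + n2 + EA) + (QN + n3 + EB)"
    by (simp add: Z_def ac_simps)
  also have "\<dots> = (PF + m1) + (PP + m2) + (QP + m3)" using p q by simp
  also have "\<dots> \<le> (FN + n1 + (EA + EB)) + (PP + m2) + (QP + m3)"
  proof -
    have "PF + m1 \<le> FN + n1 + (EA + EB)" using f e by (meson add_left_mono order_trans)
    then show ?thesis by (intro add_right_mono)
  qed
  also have "\<dots> = (EA + EB) + (m1 + n2 + n3) + (PP + QP + FN)"
    using k by (simp add: ac_simps)
  also have "\<dots> = Z + (PP + QP + FN)" by (simp add: Z_def ac_simps)
  finally show ?thesis using Zf by (simp add: ennreal_add_left_cancel_le)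
qed

lemma EXY_le:
  assumes [measurable]: "X \<in> borel_measurable Omega" "Y \<in> borel_measurable Omega"
  shows "(\<integral>\<^sup>+ x. ennreal ((X x + Y x) - (a + b)) \<partial>Omega)
       \<le> (\<integral>\<^sup>+ x. ennreal (X x - a) \<partial>Omega) + (\<integral>\<^sup>+ x. ennreal (Y x - b) \<partial>Omega)"
proof -
  have "(\<integral>\<^sup>+ x. ennreal ((X x + Y x) - (a + b)) \<partial>Omega)
      \<le> (\<integral>\<^sup>+ x. ennreal (X x - a) + ennreal (Y x - b) \<partial>Omega)"
  proof (rule nn_integral_mono)
    fix x
    have "ennreal ((X x + Y x) - (a + b)) \<le> ennreal (max (X x - a) 0 + max (Y x - b) 0)"
      by (rule ennreal_leI) linarith
    then show "ennreal ((X x + Y x) - (a + b)) \<le> ennreal (X x - a) + ennreal (Y x - b)"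
      by (simp only: PL2)
  qed
  also have "\<dots> = (\<integral>\<^sup>+ x. ennreal (X x - a) \<partial>Omega) + (\<integral>\<^sup>+ x. ennreal (Y x - b) \<partial>Omega)"
    by (rule nn_integral_add) auto
  finally show ?thesis .
qed

lemma I2t:
  assumes X[measurable]: "X \<in> borel_measurable Omega" and Y[measurable]: "Y \<in> borel_measurable Omega"
    and t: "0 < t" "t < 1"
  defines "f \<equiv> dec_rearr_minus (\<lambda>x. X x + Y x)" and "p \<equiv> dec_rearr_minus X" and "q \<equiv> dec_rearr_minus Y"
  shows "IS (ennreal t) (\<lambda>w. e2ennreal (f w)) + IS (ennreal t) (\<lambda>w. e2ennreal (- p w)) + IS (ennreal t) (\<lambda>w. e2ennreal (- q w))
       \<le> IS (ennreal t) (\<lambda>w. e2ennreal (p w)) + IS (ennreal t) (\<lambda>w. e2ennreal (q w)) + IS (ennreal t) (\<lambda>w. e2ennreal (- f w))"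
proof -
  have XY[measurable]: "(\<lambda>x. X x + Y x) \<in> borel_measurable Omega" by measurable
  have fm[measurable]: "f \<in> borel_measurable Omega" unfolding f_def by (rule meas_dec_rearr_minus[OF XY])
  obtain a where a: "p t = ereal a" using Q_finite[OF X t] unfolding p_def by (cases "dec_rearr_minus X t") auto
  obtain b where b: "q t = ereal b" using Q_finite[OF Y t] unfolding q_def by (cases "dec_rearr_minus Y t") auto
  have tau: "ennreal t \<le> 1" using t by simp
  have c1: "IS (ennreal t) (\<lambda>w. e2ennreal (f w)) + ennreal (-(a+b)) * ennreal t
       \<le> IS (ennreal t) (\<lambda>w. e2ennreal (- f w)) + ennreal (a+b) * ennreal t
         + (\<integral>\<^sup>+ x. ennreal ((X x + Y x) - (a + b)) \<partial>Omega)"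
    using CV3[OF fm tau, of "a+b"] E2[OF XY, of "a+b"] unfolding f_def by simp
  have c2: "IS (ennreal t) (\<lambda>w. e2ennreal (p w)) + ennreal (-a) * ennreal t
       = IS (ennreal t) (\<lambda>w. e2ennreal (- p w)) + ennreal a * ennreal t + (\<integral>\<^sup>+ x. ennreal (X x - a) \<partial>Omega)"
    using CV4[OF X t a[unfolded p_def]] E2[OF X, of a] unfolding p_def by simp
  have c3: "IS (ennreal t) (\<lambda>w. e2ennreal (q w)) + ennreal (-b) * ennreal t
       = IS (ennreal t) (\<lambda>w. e2ennreal (- q w)) + ennreal b * ennreal t + (\<integral>\<^sup>+ x. ennreal (Y x - b) \<partial>Omega)"
    using CV4[OF Y t b[unfolded q_def]] E2[OF Y, of b] unfolding q_def by simp
  have k: "ennreal (-(a+b)) * ennreal t + ennreal a * ennreal t + ennreal b * ennreal t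
         = ennreal (a+b) * ennreal t + ennreal (-a) * ennreal t + ennreal (-b) * ennreal t"
  proof -
    have "ennreal (-(a+b)) + ennreal a + ennreal b = ennreal (a+b) + ennreal (-a) + ennreal (-b)"
    proof -
      have "max (-(a+b)) 0 + max a 0 + max b 0 = max (a+b) 0 + max (-a) 0 + max (-b) 0"
        by (auto simp: max_def)
      then show ?thesis by (simp only: PL2 MX)
    qed
    then show ?thesis by (simp add: distrib_right[symmetric])
  qed
  show ?thesis
    by (rule ARITH2[OF c1 EXY_le[OF X Y] c2 c3 k]) (simp_all add: ennreal_mult_eq_top_iff)
qed

lemma I1t:
  assumes X[measurable]: "X \<in> borel_measurable Omega" and Y[measurable]: "Y \<in> borel_measurable Omega"
    and t: "0 < t" "t < 1"
  defines "f \<equiv> dec_rearr_minus (\<lambda>x. X x + Y x)" and "p \<equiv> dec_rearr_minus X" and "q \<equiv> dec_rearr_minus Y"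
  shows "IS (ennreal t) (\<lambda>w. e2ennreal (f w))
       \<le> IS (ennreal t) (\<lambda>w. e2ennreal (p w)) + IS (ennreal t) (\<lambda>w. e2ennreal (q w))"
proof -
  have XY[measurable]: "(\<lambda>x. X x + Y x) \<in> borel_measurable Omega" by measurable
  have fm[measurable]: "f \<in> borel_measurable Omega" unfolding f_def by (rule meas_dec_rearr_minus[OF XY])
  obtain a where a: "p t = ereal a" using Q_finite[OF X t] unfolding p_def by (cases "dec_rearr_minus X t") auto
  obtain b where b: "q t = ereal b" using Q_finite[OF Y t] unfolding q_def by (cases "dec_rearr_minus Y t") auto
  have tau: "ennreal t \<le> 1" using t by simp
  have "IS (ennreal t) (\<lambda>w. e2ennreal (f w))
      \<le> ennreal (max a 0 + max b 0) * ennreal t + (\<integral>\<^sup>+ x. ennreal ((X x + Y x) - (max a 0 + max b 0)) \<partial>Omega)"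
    using CV1[OF fm _ tau, of "max a 0 + max b 0"] E2[OF XY, of "max a 0 + max b 0"] unfolding f_def by simp
  also have "\<dots> \<le> ennreal (max a 0 + max b 0) * ennreal t
      + ((\<integral>\<^sup>+ x. ennreal (X x - max a 0) \<partial>Omega) + (\<integral>\<^sup>+ x. ennreal (Y x - max b 0) \<partial>Omega))"
    by (intro add_left_mono EXY_le[OF X Y])
  also have "\<dots> = (ennreal (max a 0) * ennreal t + (\<integral>\<^sup>+ x. ennreal (X x - max a 0) \<partial>Omega))
               + (ennreal (max b 0) * ennreal t + (\<integral>\<^sup>+ x. ennreal (Y x - max b 0) \<partial>Omega))"
    by (simp add: distrib_right distrib_left ac_simps)
  also have "\<dots> = IS (ennreal t) (\<lambda>w. e2ennreal (p w)) + IS (ennreal t) (\<lambda>w. e2ennreal (q w))"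
    unfolding p_def q_def
    by (simp only: CV2[OF X t a[unfolded p_def]] CV2[OF Y t b[unfolded q_def]] E2[OF X] E2[OF Y])
  finally show ?thesis .
qed

lemma IS_mono_tau:
  assumes "\<tau> \<le> \<sigma>"
  shows "IS \<tau> H \<le> IS \<sigma> H"
  unfolding IS_def
  by (rule nn_integral_mono) (use assms in \<open>auto simp: SS_def indicator_def\<close>)

lemma EXT:
  assumes H1[measurable]: "H1 \<in> borel_measurable Omega" and H2[measurable]: "H2 \<in> borel_measurable Omega"
    and le: "\<And>t. 0 < t \<Longrightarrow> t < 1 \<Longrightarrow> IS (ennreal t) H1 \<le> IS (ennreal t) H2"
    and tau: "\<tau> \<le> 1"
  shows "IS \<tau> H1 \<le> IS \<tau> H2"
proof -
  consider "\<tau> = 0" | "0 < \<tau> \<and> \<tau> < 1" | "\<tau> = 1" using tau by (metis le_less not_gr_zero)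
  then show ?thesis
  proof cases
    case 1
    then have "SS \<tau> = {}" by (auto simp: SS_def)
    then show ?thesis by (simp add: IS_def)
  next
    case 2
    then have "\<tau> < top" using ennreal_one_less_top order.strict_trans by blast
    then obtain t where t: "\<tau> = ennreal t" "0 \<le> t" by (cases \<tau>) auto
    with 2 have "0 < t" "t < 1" by auto
    then show ?thesis using le t by simp
  next
    case 3
    define tt where "tt = (\<lambda>n::nat. 1 - 1 / (real n + 2))"
    have t0: "0 < tt n" for n unfolding tt_def by (simp add: field_simps)
    have t1: "tt n < 1" for n unfolding tt_def by simp
    have tmono: "tt n \<le> tt (Suc n)" for n unfolding tt_def by (simp add: frac_le)
    have e1: "\<And>w. w \<in> SS 1 \<longleftrightarrow> w \<in> space Omega \<and> w < 1" using SS_ennreal[of 1] by simp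
    have eS: "\<And>w n. w \<in> SS (ennreal (tt n)) \<longleftrightarrow> w \<in> space Omega \<and> w < tt n"
      using t0 by (simp add: SS_ennreal less_imp_le)
    define f where "f = (\<lambda>n w. H1 w * indicator (SS (ennreal (tt n))) w)"
    have inc: "incseq f"
    proof (rule incseq_SucI, rule le_funI)
      fix n w
      have "SS (ennreal (tt n)) \<subseteq> SS (ennreal (tt (Suc n)))"
        using tmono[of n] by (auto simp: eS)
      then show "f n w \<le> f (Suc n) w" unfolding f_def by (auto simp: indicator_def)
    qed
    have fm: "f n \<in> borel_measurable Omega" for n unfolding f_def by measurable
    have pw: "H1 w * indicator (SS 1) w = (SUP n. f n w)" for w
    proof (rule antisym)
      show "(SUP n. f n w) \<le> H1 w * indicator (SS 1) w"
      proof (rule SUP_least)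
        fix n
        have "SS (ennreal (tt n)) \<subseteq> SS 1"
        proof
          fix x assume "x \<in> SS (ennreal (tt n))"
          then have "x \<in> space Omega" "x < tt n" by (auto simp: eS)
          moreover have "tt n < 1" by (rule t1)
          ultimately show "x \<in> SS 1" unfolding e1 by linarith
        qed
        then show "f n w \<le> H1 w * indicator (SS 1) w" unfolding f_def by (auto simp: indicator_def)
      qed
      show "H1 w * indicator (SS 1) w \<le> (SUP n. f n w)"
      proof (cases "w \<in> SS 1")
        case True
        then have w: "w \<in> space Omega" "w < 1" unfolding e1 by auto
        obtain n :: nat where n: "1 / (1 - w) < real n" using reals_Archimedean2 by blast
        have "w < tt n"
        proof -
          have p: "0 < 1 - w" using w by simp
          have "1 < real n * (1 - w)" using n p by (simp add: divide_less_eq)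
          moreover have "real n * (1 - w) \<le> (real n + 2) * (1 - w)"
            by (rule mult_right_mono) (use p in auto)
          ultimately have "1 < (real n + 2) * (1 - w)" by (rule less_le_trans)
          then have "1 / (real n + 2) < 1 - w" by (simp add: divide_less_eq mult.commute)
          then show ?thesis unfolding tt_def by linarith
        qed
        then have "w \<in> SS (ennreal (tt n))" using w by (simp add: eS)
        then have "H1 w * indicator (SS 1) w = f n w" using True unfolding f_def by simp
        then show ?thesis by (metis UNIV_I SUP_upper)
      next
        case False then show ?thesis by simp
      qed
    qed
    have "IS 1 H1 = (\<integral>\<^sup>+ w. (SUP n. f n w) \<partial>Omega)" unfolding IS_def using pw by simp
    also have "\<dots> = (SUP n. integral\<^sup>N Omega (f n))"
      by (rule nn_integral_monotone_convergence_SUP[OF inc fm])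
    also have "\<dots> = (SUP n. IS (ennreal (tt n)) H1)" unfolding f_def IS_def by simp
    also have "\<dots> \<le> (SUP n. IS (ennreal (tt n)) H2)"
      by (rule SUP_mono) (use le t0 t1 in blast)
    also have "\<dots> \<le> IS 1 H2"
      by (rule SUP_least) (rule IS_mono_tau, use t1 in \<open>simp add: less_imp_le\<close>)
    finally show ?thesis using 3 by simp
  qed
qed

lemma INNER:
  assumes Z: "Z \<in> borel_measurable Omega"
  shows "(\<integral>\<^sup>+ w. (if 0 \<le> s \<and> ennreal s < dec_rearr Z w then H w else 0) \<partial>Omega)
       = (if 0 \<le> s then IS (TY Z (ennreal s)) H else 0)"
proof (cases "0 \<le> s")
  case True
  have "(\<integral>\<^sup>+ w. (if 0 \<le> s \<and> ennreal s < dec_rearr Z w then H w else 0) \<partial>Omega) = IS (TY Z (ennreal s)) H"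
    unfolding IS_def
  proof (rule nn_integral_cong)
    fix w assume w: "w \<in> space Omega"
    have "w \<in> SS (TY Z (ennreal s)) \<longleftrightarrow> ennreal s < dec_rearr Z w"
      using w KEY2[OF Z] by (simp add: SS_def)
    then show "(if 0 \<le> s \<and> ennreal s < dec_rearr Z w then H w else 0) = H w * indicator (SS (TY Z (ennreal s))) w"
      using True by (simp add: indicator_def)
  qed
  then show ?thesis using True by simp
qed simp

lemma AG:
  assumes Z[measurable]: "Z \<in> borel_measurable Omega" and H[measurable]: "H \<in> borel_measurable Omega"
  shows "(\<integral>\<^sup>+ w. H w * dec_rearr Z w \<partial>Omega)
       = (\<integral>\<^sup>+ s. (if 0 \<le> s then IS (TY Z (ennreal s)) H else 0) \<partial>lborel)"
proof -
  have G: "dec_rearr Z \<in> borel_measurable Omega" by (rule meas_dec_rearr[OF Z])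
  show ?thesis unfolding LC[OF H G] INNER[OF Z] ..
qed

lemma EINT_SUB:
  fixes Af Bf Ap Bp Aq Bq :: ennreal
  assumes h1: "Af \<le> Ap + Aq" and h2: "Af + Bp + Bq \<le> Ap + Aq + Bf"
  shows "enn2ereal Af - enn2ereal Bf \<le> (enn2ereal Ap - enn2ereal Bp) + (enn2ereal Aq - enn2ereal Bq)"
proof (cases "Ap = top \<or> Aq = top")
  case True
  then show ?thesis by (cases "enn2ereal Bp"; cases "enn2ereal Bq"; cases "enn2ereal Ap"; cases "enn2ereal Aq") auto
next
  case False
  then have "Ap + Aq \<noteq> top" by simp
  with h1 have fAf: "Af \<noteq> top" by (metis top.extremum_unique)
  show ?thesis
  proof (cases "Bf = top")
    case True
    then show ?thesis using fAf
      by (cases Af) (auto simp: ereal_minus_mono)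
  next
    case False
    have "Ap + Aq + Bf \<noteq> top" using \<open>Ap + Aq \<noteq> top\<close> False by simp
    then have "Af + Bp + Bq \<noteq> top" using h2 by (metis top.extremum_unique)
    then have fB: "Bp \<noteq> top" "Bq \<noteq> top" by auto
    obtain af where af: "Af = ennreal af" "0 \<le> af" using fAf by (cases Af) auto
    obtain bf where bf: "Bf = ennreal bf" "0 \<le> bf" using False by (cases Bf) auto
    obtain ap where ap: "Ap = ennreal ap" "0 \<le> ap" using \<open>\<not> (Ap = top \<or> Aq = top)\<close> by (cases Ap) auto
    obtain aq where aq: "Aq = ennreal aq" "0 \<le> aq" using \<open>\<not> (Ap = top \<or> Aq = top)\<close> by (cases Aq) auto
    obtain bp where bp: "Bp = ennreal bp" "0 \<le> bp" using fB by (cases Bp) auto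
    obtain bq where bq: "Bq = ennreal bq" "0 \<le> bq" using fB by (cases Bq) auto
    have e1: "Af + Bp + Bq = ennreal (af + bp + bq)" using af bp bq by simp
    have e2: "Ap + Aq + Bf = ennreal (ap + aq + bf)" using ap aq bf by simp
    have "ennreal (af + bp + bq) \<le> ennreal (ap + aq + bf)" using h2 unfolding e1 e2 .
    then have "af + bp + bq \<le> ap + aq + bf" using ap aq bf by (subst (asm) ennreal_le_iff) auto
    then show ?thesis using af bf ap aq bp bq by simp
  qed
qed

lemma Eint_parts:
  "Eint (\<lambda>w. h w * enn2ereal (G w))
   = enn2ereal (\<integral>\<^sup>+ w. e2ennreal (h w) * G w \<partial>Omega) - enn2ereal (\<integral>\<^sup>+ w. e2ennreal (- h w) * G w \<partial>Omega)"
proof -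
  have "e2ennreal (- (h w * enn2ereal (G w))) = e2ennreal (- h w) * G w" for w
    using e2_mult[of "- h w" "G w"] by simp
  then show ?thesis unfolding Eint_def e2_mult by simp
qed

lemma TY_le1: "TY Z l \<le> 1"
  unfolding TY_def by (rule emeasure_Omega_le1)

lemma SUBZ:
  assumes X[measurable]: "X \<in> borel_measurable Omega" and Y[measurable]: "Y \<in> borel_measurable Omega"
    and Z[measurable]: "Z \<in> borel_measurable Omega"
  shows "Eint (\<lambda>w. dec_rearr_minus (\<lambda>x. X x + Y x) w * enn2ereal (dec_rearr Z w))
       \<le> Eint (\<lambda>w. dec_rearr_minus X w * enn2ereal (dec_rearr Z w))
         + Eint (\<lambda>w. dec_rearr_minus Y w * enn2ereal (dec_rearr Z w))"
proof -
  have XY[measurable]: "(\<lambda>x. X x + Y x) \<in> borel_measurable Omega" by measurable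
  define f where "f = dec_rearr_minus (\<lambda>x. X x + Y x)"
  define p where "p = dec_rearr_minus X"
  define q where "q = dec_rearr_minus Y"
  define G where "G = dec_rearr Z"
  have fm[measurable]: "f \<in> borel_measurable Omega" unfolding f_def by (rule meas_dec_rearr_minus[OF XY])
  have pm[measurable]: "p \<in> borel_measurable Omega" unfolding p_def by (rule meas_dec_rearr_minus[OF X])
  have qm[measurable]: "q \<in> borel_measurable Omega" unfolding q_def by (rule meas_dec_rearr_minus[OF Y])
  have Gm[measurable]: "G \<in> borel_measurable Omega" unfolding G_def by (rule meas_dec_rearr[OF Z])
  have AGG: "(\<integral>\<^sup>+ w. H w * G w \<partial>Omega)
       = (\<integral>\<^sup>+ s. (if 0 \<le> s then IS (TY Z (ennreal s)) H else 0) \<partial>lborel)"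
    if "H \<in> borel_measurable Omega" for H unfolding G_def by (rule AG[OF Z that])
  let ?A = "\<lambda>h. (\<integral>\<^sup>+ w. e2ennreal (h w) * G w \<partial>Omega)"
  let ?B = "\<lambda>h. (\<integral>\<^sup>+ w. e2ennreal (- h w) * G w \<partial>Omega)"
  have h1: "?A f \<le> ?A p + ?A q"
  proof -
    have "?A p + ?A q = (\<integral>\<^sup>+ w. (e2ennreal (p w) + e2ennreal (q w)) * G w \<partial>Omega)"
      by (subst nn_integral_add[symmetric]) (auto simp: distrib_right)
    moreover have "?A f \<le> (\<integral>\<^sup>+ w. (e2ennreal (p w) + e2ennreal (q w)) * G w \<partial>Omega)"
      apply (subst (1 2) AGG)
      apply measurable
    proof (rule nn_integral_mono)
      fix s :: real
      have "IS (TY Z (ennreal s)) (\<lambda>w. e2ennreal (f w)) \<le> IS (TY Z (ennreal s)) (\<lambda>w. e2ennreal (p w) + e2ennreal (q w))"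
      proof (rule EXT)
        fix t :: real assume t: "0 < t" "t < 1"
        show "IS (ennreal t) (\<lambda>w. e2ennreal (f w)) \<le> IS (ennreal t) (\<lambda>w. e2ennreal (p w) + e2ennreal (q w))"
          using I1t[OF X Y t] unfolding f_def p_def q_def
          by (subst IS_add) (auto simp: p_def[symmetric] q_def[symmetric])
      qed (auto simp: TY_le1)
      then show "(if 0 \<le> s then IS (TY Z (ennreal s)) (\<lambda>w. e2ennreal (f w)) else 0)
          \<le> (if 0 \<le> s then IS (TY Z (ennreal s)) (\<lambda>w. e2ennreal (p w) + e2ennreal (q w)) else 0)"
        by simp
    qed
    ultimately show ?thesis by simp
  qed
  have h2: "?A f + ?B p + ?B q \<le> ?A p + ?A q + ?B f"
  proof -
    have "?A f + ?B p + ?B q = (\<integral>\<^sup>+ w. (e2ennreal (f w) + e2ennreal (- p w) + e2ennreal (- q w)) * G w \<partial>Omega)"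
      by (subst nn_integral_add[symmetric], measurable, measurable)+ (auto simp: distrib_right)
    moreover have "?A p + ?A q + ?B f = (\<integral>\<^sup>+ w. (e2ennreal (p w) + e2ennreal (q w) + e2ennreal (- f w)) * G w \<partial>Omega)"
      by (subst nn_integral_add[symmetric], measurable, measurable)+ (auto simp: distrib_right)
    moreover have "(\<integral>\<^sup>+ w. (e2ennreal (f w) + e2ennreal (- p w) + e2ennreal (- q w)) * G w \<partial>Omega)
        \<le> (\<integral>\<^sup>+ w. (e2ennreal (p w) + e2ennreal (q w) + e2ennreal (- f w)) * G w \<partial>Omega)"
      apply (subst (1 2) AGG)
      apply measurable
    proof (rule nn_integral_mono)
      fix s :: real
      have "IS (TY Z (ennreal s)) (\<lambda>w. e2ennreal (f w) + e2ennreal (- p w) + e2ennreal (- q w))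
          \<le> IS (TY Z (ennreal s)) (\<lambda>w. e2ennreal (p w) + e2ennreal (q w) + e2ennreal (- f w))"
      proof (rule EXT)
        fix t :: real assume t: "0 < t" "t < 1"
        show "IS (ennreal t) (\<lambda>w. e2ennreal (f w) + e2ennreal (- p w) + e2ennreal (- q w))
            \<le> IS (ennreal t) (\<lambda>w. e2ennreal (p w) + e2ennreal (q w) + e2ennreal (- f w))"
          using I2t[OF X Y t] unfolding f_def[symmetric] p_def[symmetric] q_def[symmetric]
          by (simp add: IS_add)
      qed (auto simp: TY_le1)
      then show "(if 0 \<le> s then IS (TY Z (ennreal s)) (\<lambda>w. e2ennreal (f w) + e2ennreal (- p w) + e2ennreal (- q w)) else 0)
          \<le> (if 0 \<le> s then IS (TY Z (ennreal s)) (\<lambda>w. e2ennreal (p w) + e2ennreal (q w) + e2ennreal (- f w)) else 0)"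
        by simp
    qed
    ultimately show ?thesis by simp
  qed
  show ?thesis
    unfolding Eint_parts f_def[symmetric] p_def[symmetric] q_def[symmetric] G_def[symmetric]
    by (rule EINT_SUB[OF h1 h2])
qed

lemma enn2ereal_SUP':
  fixes F :: "'a \<Rightarrow> ennreal"
  assumes "I \<noteq> {}"
  shows "enn2ereal (SUP i\<in>I. F i) = (SUP i\<in>I. enn2ereal (F i))"
proof (rule antisym)
  let ?s = "(SUP i\<in>I. enn2ereal (F i))"
  have s0: "0 \<le> ?s" using assms by (metis SUP_upper2 all_not_in_conv enn2ereal_nonneg)
  have "(SUP i\<in>I. F i) \<le> e2ennreal ?s"
  proof (rule SUP_least)
    fix i assume "i \<in> I"
    then have "enn2ereal (F i) \<le> ?s" by (rule SUP_upper)
    then show "F i \<le> e2ennreal ?s" using e2ennreal_mono by fastforce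
  qed
  then have "enn2ereal (SUP i\<in>I. F i) \<le> enn2ereal (e2ennreal ?s)" by (simp add: less_eq_ennreal.rep_eq)
  then show "enn2ereal (SUP i\<in>I. F i) \<le> ?s" using s0 by (simp add: enn2ereal_e2ennreal)
  show "?s \<le> enn2ereal (SUP i\<in>I. F i)"
  proof (rule SUP_least)
    fix i assume "i \<in> I"
    then have "F i \<le> (SUP i\<in>I. F i)" by (rule SUP_upper)
    then show "enn2ereal (F i) \<le> enn2ereal (SUP i\<in>I. F i)" by (simp add: less_eq_ennreal.rep_eq)
  qed
qed

lemma ereal_cmult_inv: "0 < c \<Longrightarrow> ereal c * (ereal (1 / c) * x) = x"
  by (cases x) auto

lemma SUP_ereal_cmult:
  fixes F :: "'a \<Rightarrow> ereal"
  assumes c: "0 < c"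
  shows "(SUP i\<in>I. ereal c * F i) = ereal c * (SUP i\<in>I. F i)"
proof (rule antisym)
  show "(SUP i\<in>I. ereal c * F i) \<le> ereal c * (SUP i\<in>I. F i)"
    by (rule SUP_least) (use c in \<open>auto intro!: ereal_mult_left_mono SUP_upper\<close>)
  have "(SUP i\<in>I. F i) \<le> ereal (1 / c) * (SUP i\<in>I. ereal c * F i)"
  proof (rule SUP_least)
    fix i assume "i \<in> I"
    then have "ereal c * F i \<le> (SUP i\<in>I. ereal c * F i)" by (rule SUP_upper)
    then have "ereal (1 / c) * (ereal c * F i) \<le> ereal (1 / c) * (SUP i\<in>I. ereal c * F i)"
      using c by (intro ereal_mult_left_mono) auto
    moreover have "ereal (1 / c) * (ereal c * F i) = F i"
      using c by (cases "F i") auto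
    ultimately show "F i \<le> ereal (1 / c) * (SUP i\<in>I. ereal c * F i)" by simp
  qed
  then have "ereal c * (SUP i\<in>I. F i) \<le> ereal c * (ereal (1 / c) * (SUP i\<in>I. ereal c * F i))"
    using c by (intro ereal_mult_left_mono) auto
  then show "ereal c * (SUP i\<in>I. F i) \<le> (SUP i\<in>I. ereal c * F i)"
    using ereal_cmult_inv[OF c] by simp
qed

lemma Dset_meas: "Y \<in> Dset R \<Longrightarrow> Y \<in> borel_measurable Omega"
  unfolding Dset_def Mplus_def by auto

lemma Dset_int: "Y \<in> Dset R \<Longrightarrow> (\<integral>\<^sup>+ x. Y x \<partial>Omega) = 1"
  unfolding Dset_def by auto

lemma AE_unit: "AE w in Omega. 0 \<le> w \<and> w < 1"
  using AE_lt1 AE_space by eventually_elim (auto simp: space_Omega)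

lemma Eint_const:
  assumes Y: "Y \<in> Dset R"
  shows "Eint (\<lambda>w. dec_rearr_minus (\<lambda>_. c) w * enn2ereal (dec_rearr Y w)) = ereal c"
proof -
  have Ym[measurable]: "Y \<in> borel_measurable Omega" by (rule Dset_meas[OF Y])
  have Gm[measurable]: "dec_rearr Y \<in> borel_measurable Omega" by (rule meas_dec_rearr[OF Ym])
  have int1: "(\<integral>\<^sup>+ w. dec_rearr Y w \<partial>Omega) = 1" using E1[OF Ym] Dset_int[OF Y] by simp
  have a: "(\<integral>\<^sup>+ w. e2ennreal (dec_rearr_minus (\<lambda>_. c) w) * dec_rearr Y w \<partial>Omega)
      = (\<integral>\<^sup>+ w. ennreal c * dec_rearr Y w \<partial>Omega)"
    by (rule nn_integral_cong_AE) (use AE_unit in \<open>eventually_elim, simp add: Q_const\<close>)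
  have b: "(\<integral>\<^sup>+ w. e2ennreal (- dec_rearr_minus (\<lambda>_. c) w) * dec_rearr Y w \<partial>Omega)
      = (\<integral>\<^sup>+ w. ennreal (- c) * dec_rearr Y w \<partial>Omega)"
    by (rule nn_integral_cong_AE) (use AE_unit in \<open>eventually_elim, simp add: Q_const\<close>)
  have "Eint (\<lambda>w. dec_rearr_minus (\<lambda>_. c) w * enn2ereal (dec_rearr Y w))
      = enn2ereal (ennreal c) - enn2ereal (ennreal (- c))"
    unfolding Eint_parts a b by (simp add: nn_integral_cmult int1)
  also have "\<dots> = ereal c"
    by (cases "0 \<le> c") (auto simp: ennreal_neg zero_ennreal.rep_eq)
  finally show ?thesis .
qed

lemma Dset_ne:
  assumes ri: "ri_function_norm R"
    and rep: "\<forall>X\<in>Mplus. R X = (SUP Y \<in> Dset R. \<integral>\<^sup>+ w. dec_rearr X w * dec_rearr Y w \<partial>Omega)"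
  shows "Dset R \<noteq> {}"
proof
  assume e: "Dset R = {}"
  have "indicator (space Omega) \<in> Mplus" unfolding Mplus_def by measurable
  then have "R (indicator (space Omega)) = 0" using rep e by (simp add: bot_ennreal)
  moreover have "R (indicator (space Omega)) = 1" using ri unfolding ri_function_norm_def by blast
  ultimately show False by simp
qed

lemma Rm_const: "Dset R \<noteq> {} \<Longrightarrow> Rminus R (\<lambda>_. c) = ereal c"
  unfolding Rminus_def by (simp add: Eint_const)

lemma Rm_sub:
  assumes X: "X \<in> borel_measurable Omega" and Y: "Y \<in> borel_measurable Omega"
  shows "Rminus R (\<lambda>x. X x + Y x) \<le> Rminus R X + Rminus R Y"
  unfolding Rminus_def
proof (rule SUP_least)
  fix Z assume Z: "Z \<in> Dset R"
  have "Eint (\<lambda>w. dec_rearr_minus (\<lambda>x. X x + Y x) w * enn2ereal (dec_rearr Z w))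
      \<le> Eint (\<lambda>w. dec_rearr_minus X w * enn2ereal (dec_rearr Z w))
         + Eint (\<lambda>w. dec_rearr_minus Y w * enn2ereal (dec_rearr Z w))"
    by (rule SUBZ[OF X Y Dset_meas[OF Z]])
  also have "\<dots> \<le> (SUP Y\<in>Dset R. Eint (\<lambda>w. dec_rearr_minus X w * enn2ereal (dec_rearr Y w)))
                + (SUP Z\<in>Dset R. Eint (\<lambda>w. dec_rearr_minus Y w * enn2ereal (dec_rearr Z w)))"
    by (intro add_mono SUP_upper Z)
  finally show "Eint (\<lambda>w. dec_rearr_minus (\<lambda>x. X x + Y x) w * enn2ereal (dec_rearr Z w))
      \<le> (SUP Y\<in>Dset R. Eint (\<lambda>w. dec_rearr_minus X w * enn2ereal (dec_rearr Y w)))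
                + (SUP Z\<in>Dset R. Eint (\<lambda>w. dec_rearr_minus Y w * enn2ereal (dec_rearr Z w)))" .
qed

lemma Eint_mono:
  assumes "\<And>w. h1 w \<le> h2 w"
  shows "Eint (\<lambda>w. h1 w * enn2ereal (G w)) \<le> Eint (\<lambda>w. h2 w * enn2ereal (G w))"
  unfolding Eint_parts
proof (rule ereal_minus_mono)
  have "(\<integral>\<^sup>+ w. e2ennreal (h1 w) * G w \<partial>Omega) \<le> (\<integral>\<^sup>+ w. e2ennreal (h2 w) * G w \<partial>Omega)"
    by (intro nn_integral_mono mult_right_mono e2ennreal_mono assms) simp
  then show "enn2ereal (\<integral>\<^sup>+ w. e2ennreal (h1 w) * G w \<partial>Omega) \<le> enn2ereal (\<integral>\<^sup>+ w. e2ennreal (h2 w) * G w \<partial>Omega)"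
    by (simp add: less_eq_ennreal.rep_eq)
  have "(\<integral>\<^sup>+ w. e2ennreal (- h2 w) * G w \<partial>Omega) \<le> (\<integral>\<^sup>+ w. e2ennreal (- h1 w) * G w \<partial>Omega)"
    by (intro nn_integral_mono mult_right_mono e2ennreal_mono) (auto simp: assms)
  then show "enn2ereal (\<integral>\<^sup>+ w. e2ennreal (- h2 w) * G w \<partial>Omega) \<le> enn2ereal (\<integral>\<^sup>+ w. e2ennreal (- h1 w) * G w \<partial>Omega)"
    by (simp add: less_eq_ennreal.rep_eq)
qed

lemma Rm_mono:
  assumes X: "X \<in> borel_measurable Omega" and Y: "Y \<in> borel_measurable Omega"
    and le: "AE x in Omega. X x \<le> Y x"
  shows "Rminus R X \<le> Rminus R Y"
  unfolding Rminus_def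
  by (intro SUP_mono' Eint_mono Q_mono[OF X Y le])

lemma e2_cmult: "0 < a \<Longrightarrow> e2ennreal (ereal a * h) = ennreal a * e2ennreal h"
  by (cases h) (auto simp: ennreal_mult' e2ennreal_neg mult_le_0_iff ennreal_mult_top)

lemma ereal_cmult_diff: "0 < a \<Longrightarrow> ereal a * x - ereal a * y = ereal a * (x - y)"
  by (cases x; cases y) (auto simp: algebra_simps)

lemma Eint_scale:
  assumes a: "0 < a" and h[measurable]: "h \<in> borel_measurable Omega" and G[measurable]: "G \<in> borel_measurable Omega"
  shows "Eint (\<lambda>w. (ereal a * h w) * enn2ereal (G w)) = ereal a * Eint (\<lambda>w. h w * enn2ereal (G w))"
proof -
  have 1: "e2ennreal (ereal a * h w) * G w = ennreal a * (e2ennreal (h w) * G w)" for w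
    using e2_cmult[OF a] by (simp add: mult.assoc)
  have 2: "e2ennreal (- (ereal a * h w)) * G w = ennreal a * (e2ennreal (- h w) * G w)" for w
    using e2_cmult[OF a, of "- h w"] by (simp add: mult.assoc)
  show ?thesis
    unfolding Eint_parts 1 2
    by (subst (1 2) nn_integral_cmult) (auto simp: times_ennreal.rep_eq a ereal_cmult_diff less_imp_le)
qed

lemma Rm_hom:
  assumes a: "0 < a" and X[measurable]: "X \<in> borel_measurable Omega"
  shows "Rminus R (\<lambda>x. a * X x) = ereal a * Rminus R X"
proof -
  have Q[measurable]: "dec_rearr_minus X \<in> borel_measurable Omega" by (rule meas_dec_rearr_minus[OF X])
  have "Eint (\<lambda>w. dec_rearr_minus (\<lambda>x. a * X x) w * enn2ereal (dec_rearr Y w))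
      = ereal a * Eint (\<lambda>w. dec_rearr_minus X w * enn2ereal (dec_rearr Y w))" if Y: "Y \<in> Dset R" for Y
  proof -
    have G: "dec_rearr Y \<in> borel_measurable Omega" by (rule meas_dec_rearr[OF Dset_meas[OF Y]])
    show ?thesis unfolding Q_scale[OF X a] by (rule Eint_scale[OF a Q G])
  qed
  then show ?thesis unfolding Rminus_def using SUP_ereal_cmult[OF a] by simp
qed

lemma Rm_trans:
  assumes ne: "Dset R \<noteq> {}" and X[measurable]: "X \<in> borel_measurable Omega"
  shows "Rminus R (\<lambda>x. X x + c) = Rminus R X + ereal c"
proof (rule antisym)
  have "Rminus R (\<lambda>x. X x + c) \<le> Rminus R X + Rminus R (\<lambda>_. c)"
    by (rule Rm_sub) auto
  then show "Rminus R (\<lambda>x. X x + c) \<le> Rminus R X + ereal c" using Rm_const[OF ne] by simp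
  have "Rminus R (\<lambda>x. (X x + c) + (- c)) \<le> Rminus R (\<lambda>x. X x + c) + Rminus R (\<lambda>_. - c)"
    by (rule Rm_sub) auto
  then have "Rminus R X \<le> Rminus R (\<lambda>x. X x + c) + ereal (- c)" using Rm_const[OF ne] by simp
  then have "Rminus R X + ereal c \<le> Rminus R (\<lambda>x. X x + c) + ereal (- c) + ereal c"
    by (rule add_right_mono)
  also have "\<dots> = Rminus R (\<lambda>x. X x + c)"
    by (cases "Rminus R (\<lambda>x. X x + c)") auto
  finally show "Rminus R X + ereal c \<le> Rminus R (\<lambda>x. X x + c)" .
qed

lemma Rm_law:
  assumes "X \<in> borel_measurable Omega" "X' \<in> borel_measurable Omega"
    and "distr Omega borel X = distr Omega borel X'"
  shows "Rminus R X = Rminus R X'"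
  unfolding Rminus_def Q_law[OF assms] ..

lemma Rm_pos:
  assumes rep: "\<forall>X\<in>Mplus. R X = (SUP Y \<in> Dset R. \<integral>\<^sup>+ w. dec_rearr X w * dec_rearr Y w \<partial>Omega)"
    and ne: "Dset R \<noteq> {}"
    and X[measurable]: "X \<in> borel_measurable Omega" and pos: "AE x in Omega. 0 \<le> X x"
  shows "Rminus R X = enn2ereal (R (\<lambda>x. ennreal (X x)))"
proof -
  let ?D = "dec_rearr (\<lambda>x. ennreal (X x))"
  have "Eint (\<lambda>w. dec_rearr_minus X w * enn2ereal (dec_rearr Y w))
      = enn2ereal (\<integral>\<^sup>+ w. ?D w * dec_rearr Y w \<partial>Omega)" if Y: "Y \<in> Dset R" for Y
  proof -
    have a: "(\<integral>\<^sup>+ w. e2ennreal (dec_rearr_minus X w) * dec_rearr Y w \<partial>Omega)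
        = (\<integral>\<^sup>+ w. ?D w * dec_rearr Y w \<partial>Omega)"
      by (rule nn_integral_cong_AE) (use AE_unit in \<open>eventually_elim, simp add: Q_pos[OF X pos]\<close>)
    have b: "(\<integral>\<^sup>+ w. e2ennreal (- dec_rearr_minus X w) * dec_rearr Y w \<partial>Omega) = 0"
    proof -
      have "(\<integral>\<^sup>+ w. e2ennreal (- dec_rearr_minus X w) * dec_rearr Y w \<partial>Omega) = (\<integral>\<^sup>+ w. 0 \<partial>Omega)"
        by (rule nn_integral_cong_AE)
           (use AE_unit in \<open>eventually_elim, simp add: Q_pos[OF X pos] e2ennreal_neg\<close>)
      then show ?thesis by simp
    qed
    show ?thesis unfolding Eint_parts a b by (simp add: zero_ennreal.rep_eq)
  qed
  then have "Rminus R X = (SUP Y\<in>Dset R. enn2ereal (\<integral>\<^sup>+ w. ?D w * dec_rearr Y w \<partial>Omega))"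
    unfolding Rminus_def by simp
  also have "\<dots> = enn2ereal (SUP Y\<in>Dset R. (\<integral>\<^sup>+ w. ?D w * dec_rearr Y w \<partial>Omega))"
    by (rule enn2ereal_SUP'[OF ne, symmetric])
  also have "\<dots> = enn2ereal (R (\<lambda>x. ennreal (X x)))"
  proof -
    have "(\<lambda>x. ennreal (X x)) \<in> Mplus" unfolding Mplus_def by measurable
    then show ?thesis using rep by simp
  qed
  finally show ?thesis .
qed

theorem theorem12:
  fixes R :: "(real \<Rightarrow> ennreal) \<Rightarrow> ennreal"
  assumes "ri_function_norm R"
    and "\<forall>X\<in>Mplus. R X = (SUP Y \<in> Dset R. \<integral>\<^sup>+ w. dec_rearr X w * dec_rearr Y w \<partial>Omega)"
  shows "coherent_risk_measure (Rminus R) \<and> law_invariant (Rminus R) \<and>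
    (\<forall>X\<in>Mreal. (AE x in Omega. X x \<ge> 0) \<longrightarrow>
        Rminus R X = enn2ereal (R (\<lambda>x. ennreal (X x)))) \<and>
    (\<forall>X\<in>Mreal. \<forall>c::real. Rminus R (\<lambda>x. X x + c) = Rminus R X + ereal c)"
proof -
  have ne: "Dset R \<noteq> {}" by (rule Dset_ne[OF assms])
  have hom: "Rminus R (\<lambda>x. a * X x) = ereal a * Rminus R X"
    if X: "X \<in> borel_measurable Omega" and a: "0 \<le> a" for X a
  proof (cases "a = 0")
    case True
    then show ?thesis using Rm_const[OF ne, of 0] by (simp add: zero_ereal_def[symmetric])
  next
    case False
    then show ?thesis using Rm_hom[OF _ X] a by simp
  qed
  have tr: "\<forall>X\<in>Mreal. \<forall>c::real. Rminus R (\<lambda>x. X x + c) = Rminus R X + ereal c"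
    unfolding Mreal_def using Rm_trans[OF ne] by blast
  have "coherent_risk_measure (Rminus R)"
    unfolding coherent_risk_measure_def
    using hom Rm_sub Rm_mono tr unfolding Mreal_def by blast
  moreover have "law_invariant (Rminus R)"
    unfolding law_invariant_def Mreal_def using Rm_law by blast
  moreover have "\<forall>X\<in>Mreal. (AE x in Omega. X x \<ge> 0) \<longrightarrow> Rminus R X = enn2ereal (R (\<lambda>x. ennreal (X x)))"
    unfolding Mreal_def using Rm_pos[OF assms(2) ne] by blast
  ultimately show ?thesis using tr by blast
qed

end
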